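(* Let $r$ be a positive integer, $p \equiv 3 \pmod 4$ a prime, $q=p^{4r}$, $g$ a primitive root of $\mathbb{F}_q$, $B=\{g^{4k}:1 \leq k \leq (q-1)/4\} \cup \{g^{4k+3}:1 \leq k \leq (q-1)/4\}$, and $I=\{x^{p^r}-x: x \in \mathbb{F}_q\}$. If $I \cap h^{-1} I \cap B \neq \emptyset$ for every $h \in \mathbb{F}_q \setminus \mathbb{F}_{p^r}$, then $\mathbb{F}_{p^r}$ is a maximal clique in the Peisert graph $P_q^*$ (constructed with $g$); otherwise, the clique number of $P_q^*$ is $\sqrt{q}$.
   Context: The Peisert graph $P_q^*$ (for $q=p^{2s}$, $p\equiv 3\pmod 4$, with primitive root $g$) has vertex set $\mathbb{F}_q$, two distinct vertices being adjacent iff their difference lies in $\{g^j: j \equiv 0,1 \pmod 4\}$. A maximal clique is a clique to which no further vertex can be added while remaining a clique. $h^{-1}I=\{h^{-1}x: x\in I\}$. *)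

theory Defs
  imports "HOL-Computational_Algebra.Primes"
begin

definition primitive_root :: "'a::field \<Rightarrow> bool" where
  "primitive_root g \<longleftrightarrow> g \<noteq> 0 \<and> (\<forall>x. x \<noteq> 0 \<longrightarrow> (\<exists>k::nat. x = g ^ k))"

definition peisert_adj :: "'a::field \<Rightarrow> 'a \<Rightarrow> 'a \<Rightarrow> bool" where
  "peisert_adj g x y \<longleftrightarrow> x \<noteq> y \<and>
     (\<exists>j::nat. (j mod 4 = 0 \<or> j mod 4 = 1) \<and> x - y = g ^ j)"

definition peisert_clique :: "'a::field \<Rightarrow> 'a set \<Rightarrow> bool" where
  "peisert_clique g S \<longleftrightarrow> (\<forall>x\<in>S. \<forall>y\<in>S. x \<noteq> y \<longrightarrow> peisert_adj g x y)"

definition peisert_maximal_clique :: "'a::field \<Rightarrow> 'a set \<Rightarrow> bool" where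
  "peisert_maximal_clique g S \<longleftrightarrow> peisert_clique g S \<and>
     (\<forall>v. v \<notin> S \<longrightarrow> \<not> peisert_clique g (insert v S))"

definition peisert_clique_number :: "'a::{field,finite} \<Rightarrow> nat" where
  "peisert_clique_number g = Max {card S | S. peisert_clique g S}"

end

theory Submission
  imports Defs "HOL-Number_Theory.Number_Theory" "HOL-Computational_Algebra.Polynomial"
begin

lemma pow_minus1_dvd: fixes a k :: nat assumes "a \<ge> 1" shows "(a - 1) dvd (a ^ k - 1)"
proof -
  have "[a = 1] (mod (a - 1))" using assms by (simp add: cong_altdef_nat)
  hence "[a ^ k = 1 ^ k] (mod (a - 1))" by (rule cong_pow)
  hence "[a ^ k = 1] (mod (a - 1))" by simp
  moreover have "a ^ k \<ge> 1" using assms by simp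
  ultimately show ?thesis by (simp add: cong_altdef_nat)
qed

locale pgraph =
  fixes g :: "'a::{field,finite}" and p r :: nat
  assumes r_pos: "r > 0" and p_prime: "prime p" and p_mod: "p mod 4 = 3"
    and card_K: "card (UNIV :: 'a set) = p ^ (4 * r)" and prim: "primitive_root g"
begin

definition qq :: nat where "qq = p ^ (4 * r)"
definition nn :: nat where "nn = p ^ (4 * r) - 1"
definition QQ :: nat where "QQ = p ^ r"
definition MM :: nat where "MM = p ^ (2 * r)"

lemma p_ge3: "p \<ge> 3"
  using p_mod p_prime prime_ge_2_nat[of p] by (cases "p = 2") auto

lemma p_odd: "odd p"
  using p_mod by presburger

lemma MM_sq: "MM = QQ ^ 2" unfolding MM_def QQ_def by (metis power_mult mult.commute)
lemma qq_sq: "qq = MM ^ 2" unfolding MM_def qq_def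
  by (metis power_mult mult.commute mult.assoc numeral_Bit0_eq_double mult_2)
lemma QQ_ge3: "QQ \<ge> 3"
proof -
  have "p ^ 1 \<le> p ^ r" using r_pos p_ge3 by (intro power_increasing) auto
  thus ?thesis using p_ge3 unfolding QQ_def by simp
qed
lemma QQ_odd: "odd QQ" unfolding QQ_def using p_odd by simp
lemma MM_ge9: "MM \<ge> 9"
proof -
  have "3 * 3 \<le> QQ * QQ" using QQ_ge3 by (intro mult_mono) auto
  thus ?thesis by (simp add: MM_sq power2_eq_square)
qed
lemma MM_odd: "odd MM" by (simp add: MM_sq QQ_odd)
lemma nn_eq: "nn = (MM - 1) * (MM + 1)"
proof -
  have "nn = MM ^ 2 - 1" by (simp add: nn_def qq_sq[unfolded qq_def])
  also have "\<dots> = (MM - 1) * (MM + 1)" using MM_ge9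
    by (simp add: power2_eq_square algebra_simps)
  finally show ?thesis .
qed
lemma qq_eq: "qq = nn + 1" unfolding qq_def nn_def using p_ge3 by simp
lemma card_UNIV: "card (UNIV :: 'a set) = qq" using card_K by (simp add: qq_def)

lemma MM_mod8: "MM mod 8 = 1"
proof -
  have "p mod 8 = 3 \<or> p mod 8 = 7" using p_mod by presburger
  moreover have "(p * p) mod 8 = ((p mod 8) * (p mod 8)) mod 8" by (simp add: mod_mult_eq)
  ultimately have "(p * p) mod 8 = 1" by auto
  hence "(p ^ 2) mod 8 = 1" by (simp add: power2_eq_square)
  hence "((p ^ 2) mod 8) ^ r mod 8 = 1" by simp
  hence "(p ^ 2) ^ r mod 8 = 1" by (simp only: power_mod)
  thus ?thesis unfolding MM_def by (simp add: power_mult)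
qed
lemma four_dvd_MM1: "4 dvd MM - 1" using MM_mod8 MM_ge9 by presburger
lemma eight_dvd_MM1: "8 dvd MM - 1" using MM_mod8 MM_ge9 by presburger
lemma four_dvd_nn: "4 dvd nn" using four_dvd_MM1 by (simp add: nn_eq)
lemma eight_dvd_nn: "8 dvd nn" using eight_dvd_MM1 by (simp add: nn_eq)
lemma nn_pos: "nn > 0" using MM_ge9 by (simp add: nn_eq)

lemma QQ1_dvd: "(QQ - 1) dvd nn"
proof -
  have "(QQ - 1) dvd QQ ^ 4 - 1" using QQ_ge3 by (intro pow_minus1_dvd) auto
  moreover have "QQ ^ 4 = p ^ (4 * r)" unfolding QQ_def by (metis power_mult mult.commute)
  ultimately show ?thesis by (simp add: nn_def)
qed
lemma MM1_dvd: "(MM - 1) dvd nn" by (simp add: nn_eq)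
lemma p1_dvd: "(p - 1) dvd nn"
  unfolding nn_def using p_ge3 by (intro pow_minus1_dvd) auto


lemma g_nz[simp]: "g \<noteq> 0" using prim unfolding primitive_root_def by auto
lemma g_gen: "x \<noteq> 0 \<Longrightarrow> \<exists>k. x = g ^ k" using prim unfolding primitive_root_def by auto
lemma gpow_nz[simp]: "g ^ k \<noteq> 0" using g_nz by simp

lemma g_order: "g ^ nn = 1 \<and> inj_on (\<lambda>k. g ^ k) {..<nn} \<and> (\<lambda>k. g ^ k) ` {..<nn} = UNIV - {0}"
proof -
  have "\<not> inj_on (\<lambda>k. g ^ k) {..qq}"
  proof
    assume "inj_on (\<lambda>k. g ^ k) {..qq}"
    hence "card {..qq} \<le> card (UNIV :: 'a set)" by (rule card_inj_on_le) auto
    thus False using card_UNIV by simp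
  qed
  then obtain i j where ij: "i \<le> qq" "j \<le> qq" "i \<noteq> j" "g ^ i = g ^ j" unfolding inj_on_def by auto
  have "\<exists>k>0. g ^ k = 1"
  proof (cases "i < j")
    case True
    have "g ^ j = g ^ i * g ^ (j - i)" using True by (simp add: power_add[symmetric])
    hence "g ^ (j - i) = 1" using ij(4) g_nz by simp
    thus ?thesis using True by (intro exI[of _ "j - i"]) auto
  next
    case False
    hence "j < i" using ij by auto
    have "g ^ i = g ^ j * g ^ (i - j)" using \<open>j < i\<close> by (simp add: power_add[symmetric])
    hence "g ^ (i - j) = 1" using ij(4) g_nz by simp
    thus ?thesis using \<open>j < i\<close> by (intro exI[of _ "i - j"]) auto
  qed
  define d where "d = (LEAST k. 0 < k \<and> g ^ k = 1)"
  have d: "0 < d" "g ^ d = 1" using LeastI_ex[OF \<open>\<exists>k>0. g ^ k = 1\<close>] unfolding d_def by auto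
  have dmin: "\<And>k. 0 < k \<Longrightarrow> k < d \<Longrightarrow> g ^ k \<noteq> 1" unfolding d_def using not_less_Least by blast
  have red: "g ^ k = g ^ (k mod d)" for k
  proof -
    have "g ^ k = g ^ (d * (k div d) + k mod d)" by simp
    also have "\<dots> = (g ^ d) ^ (k div d) * g ^ (k mod d)" by (simp only: power_add power_mult)
    finally have "g ^ k = (g ^ d) ^ (k div d) * g ^ (k mod d)" .
    thus ?thesis using d by simp
  qed
  have inj: "inj_on (\<lambda>k. g ^ k) {..<d}"
  proof (rule inj_onI)
    fix a b assume ab: "a \<in> {..<d}" "b \<in> {..<d}" "g ^ a = g ^ b"
    show "a = b"
    proof (rule ccontr)
      assume "a \<noteq> b"
      then consider "a < b" | "b < a" by linarith
      thus False
      proof cases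
        case 1
        have "g ^ b = g ^ a * g ^ (b - a)" using 1 by (simp add: power_add[symmetric])
        hence "g ^ (b - a) = 1" using ab by simp
        moreover have "b - a < d" "0 < b - a" using 1 ab(2) by auto
        ultimately show False using dmin by blast
      next
        case 2
        have "g ^ a = g ^ b * g ^ (a - b)" using 2 by (simp add: power_add[symmetric])
        hence "g ^ (a - b) = 1" using ab by simp
        moreover have "a - b < d" "0 < a - b" using 2 ab(1) by auto
        ultimately show False using dmin by blast
      qed
    qed
  qed
  have img: "(\<lambda>k. g ^ k) ` {..<d} = UNIV - {0}"
  proof
    show "(\<lambda>k. g ^ k) ` {..<d} \<subseteq> UNIV - {0}" by auto
    show "UNIV - {0} \<subseteq> (\<lambda>k. g ^ k) ` {..<d}"
    proof
      fix x :: 'a assume "x \<in> UNIV - {0}"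
      then obtain k where "x = g ^ k" using g_gen by auto
      hence "x = g ^ (k mod d)" using red by simp
      moreover have "k mod d < d" using d by simp
      ultimately show "x \<in> (\<lambda>k. g ^ k) ` {..<d}" by auto
    qed
  qed
  have "card {..<d} = card (UNIV - {0::'a})" using card_image[OF inj] img by simp
  also have "\<dots> = qq - 1" using card_UNIV by (simp add: card_Diff_singleton)
  finally have "d = nn" using qq_eq by simp
  thus ?thesis using d inj img by simp
qed

lemma g_nn: "g ^ nn = 1" using g_order by simp

lemma gpow_mod: "g ^ k = g ^ (k mod nn)"
proof -
  have "g ^ k = g ^ (nn * (k div nn) + k mod nn)" by simp
  also have "\<dots> = (g ^ nn) ^ (k div nn) * g ^ (k mod nn)" by (simp only: power_add power_mult)
  finally have "g ^ k = (g ^ nn) ^ (k div nn) * g ^ (k mod nn)" .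
  thus ?thesis using g_nn by simp
qed

lemma gpow_eq_iff: "g ^ a = g ^ b \<longleftrightarrow> a mod nn = b mod nn"
proof
  assume "g ^ a = g ^ b"
  hence "g ^ (a mod nn) = g ^ (b mod nn)" using gpow_mod by metis
  thus "a mod nn = b mod nn" using g_order nn_pos unfolding inj_on_def by auto
next
  assume "a mod nn = b mod nn" thus "g ^ a = g ^ b" using gpow_mod by metis
qed

lemma gpow_eq_1_iff: "g ^ a = 1 \<longleftrightarrow> nn dvd a"
  using gpow_eq_iff[of a 0] by (simp add: mod_eq_0_iff_dvd)

definition ind :: "'a \<Rightarrow> nat" where "ind x = inv_into {..<nn} (\<lambda>k. g ^ k) x"

lemma ind_props: assumes "x \<noteq> 0" shows "ind x < nn" "g ^ ind x = x"
proof -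
  have "x \<in> (\<lambda>k. g ^ k) ` {..<nn}" using g_order assms by auto
  show "ind x < nn" unfolding ind_def using inv_into_into[OF \<open>x \<in> _\<close>] by simp
  show "g ^ ind x = x" unfolding ind_def using f_inv_into_f[OF \<open>x \<in> _\<close>] by simp
qed

lemma ind_gpow: "ind (g ^ k) = k mod nn"
proof -
  have "g ^ ind (g ^ k) = g ^ k" using ind_props(2)[of "g ^ k"] by simp
  hence "ind (g ^ k) mod nn = k mod nn" using gpow_eq_iff by blast
  thus ?thesis using ind_props(1)[of "g ^ k"] by simp
qed

lemma ind_eqI: "x = g ^ k \<Longrightarrow> ind x = k mod nn" using ind_gpow by simp

lemma ind_mult: fixes x y :: 'a assumes "x \<noteq> 0" "y \<noteq> 0" shows "ind (x * y) = (ind x + ind y) mod nn"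
  using ind_eqI[of "x * y" "ind x + ind y"] ind_props assms by (simp add: power_add)

lemma ind_pow: fixes x :: 'a assumes "x \<noteq> 0" shows "ind (x ^ k) = (ind x * k) mod nn"
  using ind_eqI[of "x ^ k" "ind x * k"] ind_props assms by (simp add: power_mult)

lemma ind_one: "ind 1 = 0" using ind_eqI[of 1 0] by simp

lemma pow_eq_1_iff: fixes x :: 'a assumes "x \<noteq> 0" shows "x ^ e = 1 \<longleftrightarrow> nn dvd ind x * e"
proof -
  have "x ^ e = g ^ (ind x * e)" using ind_props[OF assms] by (metis power_mult)
  thus ?thesis using gpow_eq_1_iff by simp
qed

lemma x_pow_qq: "(x::'a) ^ qq = x"
proof (cases "x = 0")
  case True thus ?thesis using qq_eq by simp
next
  case False
  have "x ^ qq = x * x ^ nn" using qq_eq by simp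
  moreover have "x ^ nn = 1" using pow_eq_1_iff[OF False] by simp
  ultimately show ?thesis by simp
qed

lemma x_pow_nn: "(x::'a) \<noteq> 0 \<Longrightarrow> x ^ nn = 1" using pow_eq_1_iff by simp

lemma subfield_mem: fixes x :: 'a assumes "m \<ge> 2" "(m - 1) dvd nn" "x \<noteq> 0"
  shows "x ^ m = x \<longleftrightarrow> (nn div (m - 1)) dvd ind x"
proof -
  have "m = Suc (m - 1)" using assms by simp
  hence "x ^ m = x * x ^ (m - 1)" by (metis power_Suc)
  hence "x ^ m = x \<longleftrightarrow> x ^ (m - 1) = 1" using assms by auto
  also have "\<dots> \<longleftrightarrow> nn dvd ind x * (m - 1)" using pow_eq_1_iff assms by simp
  also have "\<dots> \<longleftrightarrow> (nn div (m - 1)) dvd ind x"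
  proof -
    obtain c where c: "nn = (m - 1) * c" using assms by blast
    have "m - 1 > 0" using assms by simp
    hence "nn div (m - 1) = c" using c by simp
    moreover have "(m - 1) * c dvd ind x * (m - 1) \<longleftrightarrow> c dvd ind x"
      using \<open>m - 1 > 0\<close> by (simp add: mult.commute)
    ultimately show ?thesis using c by simp
  qed
  finally show ?thesis .
qed

lemma subfield_card: assumes "m \<ge> 2" "(m - 1) dvd nn"
  shows "card {x::'a. x ^ m = x} = m"
proof -
  define d where "d = nn div (m - 1)"
  have nnd: "nn = (m - 1) * d" using assms d_def by simp
  have dpos: "d > 0" using nnd nn_pos by (cases d) auto
  have eq: "{x::'a. x ^ m = x} = insert 0 ((\<lambda>k. g ^ k) ` ((\<lambda>i. d * i) ` {..<m - 1}))"
  proof (intro equalityI subsetI)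
    fix x :: 'a assume "x \<in> {x. x ^ m = x}"
    show "x \<in> insert 0 ((\<lambda>k. g ^ k) ` ((\<lambda>i. d * i) ` {..<m - 1}))"
    proof (cases "x = 0")
      case False
      hence "d dvd ind x" using subfield_mem assms \<open>x \<in> _\<close> d_def by auto
      then obtain i where i: "ind x = d * i" by blast
      have "d * i < d * (m - 1)" using ind_props[OF False] i nnd by (simp add: mult.commute)
      hence "i < m - 1" using dpos by simp
      thus ?thesis using ind_props(2)[OF False] i by auto
    qed simp
  next
    fix x :: 'a assume "x \<in> insert 0 ((\<lambda>k. g ^ k) ` ((\<lambda>i. d * i) ` {..<m - 1}))"
    thus "x \<in> {x. x ^ m = x}"
    proof
      assume "x = 0" thus ?thesis using assms by simp
    next
      assume "x \<in> (\<lambda>k. g ^ k) ` ((\<lambda>i. d * i) ` {..<m - 1})"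
      then obtain i where i: "i < m - 1" "x = g ^ (d * i)" by auto
      have "d * i < nn" using i nnd dpos by (simp add: mult.commute)
      hence "ind x = d * i" using i ind_gpow by simp
      moreover have "x \<noteq> 0" using i g_nz by simp
      ultimately show ?thesis using subfield_mem[OF assms(1,2), of x] d_def by auto
    qed
  qed
  have inj1: "inj_on (\<lambda>i. d * i) {..<m - 1}" using dpos by (auto simp: inj_on_def)
  have sub: "(\<lambda>i. d * i) ` {..<m - 1} \<subseteq> {..<nn}"
  proof
    fix k assume "k \<in> (\<lambda>i. d * i) ` {..<m - 1}"
    then obtain i where "i < m - 1" "k = d * i" by auto
    thus "k \<in> {..<nn}" using nnd dpos by (simp add: mult.commute)
  qed
  have inj2: "inj_on (\<lambda>k. g ^ k) ((\<lambda>i. d * i) ` {..<m - 1})"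
    using g_order sub inj_on_subset by blast
  have "card ((\<lambda>k. g ^ k) ` ((\<lambda>i. d * i) ` {..<m - 1})) = m - 1"
    using card_image[OF inj2] card_image[OF inj1] by simp
  moreover have "0 \<notin> (\<lambda>k. g ^ k) ` ((\<lambda>i. d * i) ` {..<m - 1})" using g_nz by auto
  ultimately show ?thesis unfolding eq using assms by simp
qed

lemma CHAR_eq: "CHAR('a) = p"
proof -
  have "CHAR('a) > 0" by (rule finite_imp_CHAR_pos) simp
  hence pc: "prime CHAR('a)" using prime_CHAR_semidom by blast
  have "CHAR('a) dvd p ^ (4 * r)" using CHAR_dvd_CARD[where 'a='a] card_K by simp
  hence "CHAR('a) dvd p" using pc prime_dvd_power by blast
  thus ?thesis using pc p_prime by (simp add: primes_dvd_imp_eq)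
qed

lemma CHAR_prime': "prime CHAR('a)" using CHAR_eq p_prime by simp

lemma frob_add: "(x + y :: 'a) ^ (p ^ k) = x ^ (p ^ k) + y ^ (p ^ k)"
  by (rule freshmans_dream') (use CHAR_eq p_prime in auto)

lemma frob_sum: "(\<Sum>i\<in>A. f i :: 'a) ^ (p ^ k) = (\<Sum>i\<in>A. f i ^ (p ^ k))"
  by (rule freshmans_dream_sum') (use CHAR_eq p_prime in auto)

lemma frob_diff: "(x - y :: 'a) ^ (p ^ k) = x ^ (p ^ k) - y ^ (p ^ k)"
proof -
  have "x ^ (p ^ k) = ((x - y) + y) ^ (p ^ k)" by simp
  also have "\<dots> = (x - y) ^ (p ^ k) + y ^ (p ^ k)" by (rule frob_add)
  finally show ?thesis by simp
qed

lemma frob_neg: "(- x :: 'a) ^ (p ^ k) = - (x ^ (p ^ k))"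
proof -
  have "(0::'a) ^ (p ^ k) = 0" using p_ge3 by simp
  thus ?thesis using frob_diff[of 0 x k] by simp
qed

lemma of_nat_p: "of_nat p = (0::'a)" using of_nat_CHAR[where 'a='a] unfolding CHAR_eq .

lemma of_nat_eq_iff: "(of_nat a :: 'a) = of_nat b \<longleftrightarrow> a mod p = b mod p"
  using of_nat_eq_iff_cong_CHAR[where 'a='a] CHAR_eq by (simp add: cong_def)

end

lemma sum_lessThan_add: fixes a b :: nat shows "(\<Sum>i<a + b. f i) = (\<Sum>i<a. f i) + (\<Sum>i<b. f (a + i))"
  by (induction b) (simp_all add: add_ac)

lemma sum_shift_cyc: fixes f :: "nat \<Rightarrow> 'b::cancel_comm_monoid_add" assumes "f m = f 0" shows "(\<Sum>i<m. f (Suc i)) = (\<Sum>i<m. f i)"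
proof -
  have "(\<Sum>i<Suc m. f i) = f 0 + (\<Sum>i<m. f (Suc i))" by (rule sum.lessThan_Suc_shift)
  moreover have "(\<Sum>i<Suc m. f i) = (\<Sum>i<m. f i) + f m" by simp
  ultimately have "f 0 + (\<Sum>i<m. f (Suc i)) = f 0 + (\<Sum>i<m. f i)" using assms by (simp add: add.commute)
  thus ?thesis by simp
qed

context pgraph begin

definition PF :: "'a set" where "PF = {y. y ^ p = y}"
definition LL :: "'a set" where "LL = {y. y ^ MM = y}"
definition FF :: "'a set" where "FF = {y. y ^ QQ = y}"

lemma MM1_dvd': "(MM - 1) dvd nn" by (rule MM1_dvd)

lemma card_PF: "card PF = p" unfolding PF_def using subfield_card[of p] p_ge3 p1_dvd by simp
lemma card_LL: "card LL = MM" unfolding LL_def using subfield_card[of MM] MM_ge9 MM1_dvd by simp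
lemma card_FF: "card FF = QQ" unfolding FF_def using subfield_card[of QQ] QQ_ge3 QQ1_dvd by simp

lemma of_nat_pow_p: "(of_nat k :: 'a) ^ p = of_nat k"
proof (induction k)
  case 0 thus ?case using p_ge3 by simp
next
  case (Suc k)
  have "(of_nat k + 1 :: 'a) ^ (p ^ 1) = of_nat k ^ (p ^ 1) + 1 ^ (p ^ 1)" by (rule frob_add)
  thus ?case using Suc by (simp add: add.commute)
qed

lemma PF_eq: "PF = of_nat ` {..<p}"
proof -
  have sub: "of_nat ` {..<p} \<subseteq> PF" unfolding PF_def using of_nat_pow_p by auto
  have "inj_on (of_nat :: nat \<Rightarrow> 'a) {..<p}"
    by (rule inj_onI) (simp add: of_nat_eq_iff)
  hence "card (of_nat ` {..<p} :: 'a set) = p" by (simp add: card_image)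
  thus ?thesis using card_subset_eq[OF _ sub] card_PF by simp
qed

definition idx :: "'a \<Rightarrow> nat" where "idx y = (THE k. k < p \<and> of_nat k = y)"

lemma idx_props: assumes "y \<in> PF" shows "idx y < p" "of_nat (idx y) = y"
proof -
  obtain k where k: "k < p" "of_nat k = y" using assms PF_eq by auto
  have uniq: "k' = k" if "k' < p \<and> of_nat k' = y" for k'
  proof -
    have "(of_nat k' :: 'a) = of_nat k" using that k by simp
    hence "k' mod p = k mod p" by (simp only: of_nat_eq_iff)
    thus ?thesis using that k by simp
  qed
  have "idx y = k" unfolding idx_def
  proof (rule the_equality)
    show "k < p \<and> of_nat k = y" using k by simp
  qed (rule uniq)
  thus "idx y < p" "of_nat (idx y) = y" using k by auto
qed

lemma idx_of_nat: "idx (of_nat k) = k mod p"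
proof -
  have e: "(of_nat k :: 'a) = of_nat (k mod p)" using of_nat_eq_iff by simp
  have "k mod p < p" using p_ge3 by simp
  hence "of_nat k \<in> PF" unfolding PF_eq e by blast
  hence "(of_nat (idx (of_nat k)) :: 'a) = of_nat k" "idx (of_nat k) < p" using idx_props by auto
  thus ?thesis using of_nat_eq_iff by simp
qed

lemma PF_add: "a \<in> PF \<Longrightarrow> b \<in> PF \<Longrightarrow> a + b \<in> PF"
  unfolding PF_def using frob_add[of a b 1] by simp

lemma idx_add: assumes "a \<in> PF" "b \<in> PF" shows "idx (a + b) = (idx a + idx b) mod p"
proof -
  have "a + b = of_nat (idx a + idx b)" using idx_props(2)[OF assms(1)] idx_props(2)[OF assms(2)] by simp
  hence "idx (a + b) = idx (of_nat (idx a + idx b))" by (simp only:)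
  thus ?thesis by (simp only: idx_of_nat)
qed

lemma idx_0: "idx 0 = 0" using idx_of_nat[of 0] by simp

definition Tr :: "nat \<Rightarrow> 'a \<Rightarrow> 'a" where "Tr d x = (\<Sum>i<d. x ^ (p ^ i))"

lemma Tr_add: "Tr d (x + y) = Tr d x + Tr d y"
  unfolding Tr_def by (simp add: frob_add sum.distrib)

lemma Tr_frob: assumes "x ^ (p ^ d) = x" shows "Tr d (x ^ p) = Tr d x" "(Tr d x) ^ p = Tr d x"
proof -
  have e: "(x ^ p) ^ (p ^ i) = x ^ (p ^ Suc i)" for i by (simp only: power_mult[symmetric] power_Suc)
  have e2: "(x ^ (p ^ i)) ^ (p ^ 1) = (x ^ p) ^ (p ^ i)" for i by (metis power_mult mult.commute power_one_right)
  have "Tr d (x ^ p) = (\<Sum>i<d. x ^ (p ^ Suc i))" unfolding Tr_def using e by simp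
  also have "\<dots> = Tr d x" unfolding Tr_def by (rule sum_shift_cyc[of "\<lambda>i. x ^ (p ^ i)"]) (use assms in simp)
  finally show "Tr d (x ^ p) = Tr d x" .
  have "(Tr d x) ^ (p ^ 1) = (\<Sum>i<d. (x ^ (p ^ i)) ^ (p ^ 1))" unfolding Tr_def by (rule frob_sum)
  also have "\<dots> = Tr d (x ^ p)" unfolding Tr_def using e2 by simp
  finally show "(Tr d x) ^ p = Tr d x" using \<open>Tr d (x ^ p) = Tr d x\<close> by simp
qed

lemma xK: "(x::'a) ^ (p ^ (4 * r)) = x" using x_pow_qq by (simp add: qq_def)
lemma xL: "x \<in> LL \<Longrightarrow> x ^ (p ^ (2 * r)) = x" unfolding LL_def MM_def by simp

abbreviation TK where "TK \<equiv> Tr (4 * r)"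
abbreviation TL where "TL \<equiv> Tr (2 * r)"

lemma TK_PF: "TK x \<in> PF" unfolding PF_def using Tr_frob(2)[OF xK] by simp
lemma TL_PF: "x \<in> LL \<Longrightarrow> TL x \<in> PF" unfolding PF_def using Tr_frob(2)[OF xL] by simp
lemma TK_frob: "TK (x ^ p) = TK x" using Tr_frob(1)[OF xK] .
lemma TL_frob: "x \<in> LL \<Longrightarrow> TL (x ^ p) = TL x" using Tr_frob(1)[OF xL] by blast

lemma TK_TL: "TK x = TL (x + x ^ MM)"
proof -
  have "TK x = (\<Sum>i<2 * r + 2 * r. x ^ (p ^ i))" unfolding Tr_def by simp
  also have "\<dots> = TL x + (\<Sum>i<2 * r. x ^ (p ^ (2 * r + i)))" unfolding Tr_def by (rule sum_lessThan_add)
  also have "(\<Sum>i<2 * r. x ^ (p ^ (2 * r + i))) = TL (x ^ MM)"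
    unfolding Tr_def MM_def by (simp add: power_add power_mult[symmetric])
  finally show ?thesis by (simp add: Tr_add)
qed

lemma LL_tr: "x + x ^ MM \<in> LL"
proof -
  have "(x + x ^ MM) ^ (p ^ (2 * r)) = x ^ (p ^ (2 * r)) + (x ^ MM) ^ (p ^ (2 * r))" by (rule frob_add)
  moreover have "(x ^ MM) ^ (p ^ (2 * r)) = x ^ (p ^ (2 * r) * p ^ (2 * r))"
    unfolding MM_def by (simp only: power_mult)
  moreover have "p ^ (2 * r) * p ^ (2 * r) = qq" unfolding qq_def by (simp flip: power_add)
  ultimately show ?thesis unfolding LL_def MM_def using x_pow_qq by simp
qed

definition tpoly :: "nat \<Rightarrow> 'a poly" where "tpoly d = (\<Sum>i<d. monom 1 (p ^ i))"

lemma poly_tpoly: "poly (tpoly d) x = Tr d x"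
  unfolding tpoly_def Tr_def by (simp add: poly_sum poly_monom)

lemma coeff_tpoly: "coeff (tpoly d) k = (if \<exists>i<d. k = p ^ i then 1 else 0)"
proof -
  have inj: "inj (\<lambda>i. p ^ i)" using p_ge3 by (intro injI) (simp add: power_inject_exp)
  have "coeff (tpoly d) k = (\<Sum>i<d. if p ^ i = k then 1 else 0)"
    unfolding tpoly_def by (simp add: coeff_sum coeff_monom)
  also have "\<dots> = (if \<exists>i<d. k = p ^ i then 1 else 0)"
  proof (cases "\<exists>i<d. k = p ^ i")
    case True
    then obtain i where i: "i < d" "k = p ^ i" by auto
    have "(\<Sum>j<d. if p ^ j = k then 1 else (0::'a)) = (\<Sum>j\<in>{i}. if p ^ j = k then 1 else 0)"
      by (rule sum.mono_neutral_right) (use i inj in \<open>auto simp: inj_def\<close>)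
    thus ?thesis using True i by simp
  next
    case False thus ?thesis by (intro trans[OF sum.neutral]) auto
  qed
  finally show ?thesis .
qed

lemma tpoly_nz: assumes "d > 0" shows "tpoly d \<noteq> 0"
proof
  assume "tpoly d = 0"
  moreover have "\<exists>i<d. p ^ (d - 1) = p ^ i" using assms by (intro exI[of _ "d - 1"]) auto
  ultimately show False using coeff_tpoly[of d "p ^ (d - 1)"] by simp
qed

lemma degree_tpoly: "d > 0 \<Longrightarrow> degree (tpoly d) \<le> p ^ (d - 1)"
proof (rule degree_le)
  assume "d > 0"
  show "\<forall>i>p ^ (d - 1). coeff (tpoly d) i = 0"
  proof (intro allI impI)
    fix k assume k: "p ^ (d - 1) < k"
    have "\<not> (\<exists>i<d. k = p ^ i)"
    proof
      assume "\<exists>i<d. k = p ^ i"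
      then obtain i where "i < d" "k = p ^ i" by auto
      moreover have "p ^ i \<le> p ^ (d - 1)" by (rule power_increasing) (use \<open>i < d\<close> p_ge3 in auto)
      ultimately have "k \<le> p ^ (d - 1)" by simp
      thus False using k by simp
    qed
    thus "coeff (tpoly d) k = 0" using coeff_tpoly by simp
  qed
qed

lemma card_Tr_roots: "d > 0 \<Longrightarrow> card {x. Tr d x = 0} \<le> p ^ (d - 1)"
  using card_poly_roots_bound[OF tpoly_nz, of d] degree_tpoly[of d] poly_tpoly by simp

lemma TK_nontriv: "\<exists>a. TK a \<noteq> 0"
proof (rule ccontr)
  assume "\<not> (\<exists>a. TK a \<noteq> 0)"
  hence "{x. TK x = 0} = UNIV" by auto
  hence "qq \<le> p ^ (4 * r - 1)" using card_Tr_roots[of "4 * r"] r_pos card_UNIV by simp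
  moreover have "p ^ (4 * r - 1) < p ^ (4 * r)" using p_ge3 r_pos by (intro power_strict_increasing) auto
  ultimately show False by (simp add: qq_def)
qed

lemma TL_nontriv: "\<exists>a\<in>LL. TL a \<noteq> 0"
proof (rule ccontr)
  assume "\<not> (\<exists>a\<in>LL. TL a \<noteq> 0)"
  hence "LL \<subseteq> {x. TL x = 0}" by auto
  hence "card LL \<le> card {x. TL x = 0}" by (intro card_mono) auto
  hence "MM \<le> p ^ (2 * r - 1)" using card_Tr_roots[of "2 * r"] r_pos card_LL by simp
  moreover have "p ^ (2 * r - 1) < p ^ (2 * r)" using p_ge3 r_pos by (intro power_strict_increasing) auto
  ultimately show False by (simp add: MM_def)
qed

end

context pgraph begin

lemma Esub_add: "x ^ (p ^ d) = x \<Longrightarrow> y ^ (p ^ d) = y \<Longrightarrow> (x + y :: 'a) ^ (p ^ d) = x + y"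
  by (simp add: frob_add)
lemma Esub_diff: "x ^ (p ^ d) = x \<Longrightarrow> y ^ (p ^ d) = y \<Longrightarrow> (x - y :: 'a) ^ (p ^ d) = x - y"
  by (simp add: frob_diff)
lemma Esub_neg: "x ^ (p ^ d) = x \<Longrightarrow> (- x :: 'a) ^ (p ^ d) = - x"
  by (simp add: frob_neg)
lemma Esub_mult: "x ^ (p ^ d) = x \<Longrightarrow> y ^ (p ^ d) = y \<Longrightarrow> (x * y :: 'a) ^ (p ^ d) = x * y"
  by (simp add: power_mult_distrib)
lemma Esub_inv: "x ^ (p ^ d) = x \<Longrightarrow> (inverse x :: 'a) ^ (p ^ d) = inverse x"
  by (simp add: power_inverse)

lemma LL_alt: "LL = {y. y ^ (p ^ (2 * r)) = y}" unfolding LL_def MM_def ..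
lemma FF_alt: "FF = {y. y ^ (p ^ r) = y}" unfolding FF_def QQ_def ..
lemma PF_alt: "PF = {y. y ^ (p ^ 1) = y}" unfolding PF_def by simp

lemma LL_add: "x \<in> LL \<Longrightarrow> y \<in> LL \<Longrightarrow> x + y \<in> LL" unfolding LL_alt using Esub_add by blast
lemma LL_diff: "x \<in> LL \<Longrightarrow> y \<in> LL \<Longrightarrow> x - y \<in> LL" unfolding LL_alt using Esub_diff by blast
lemma LL_neg: "x \<in> LL \<Longrightarrow> - x \<in> LL" unfolding LL_alt using Esub_neg by blast
lemma LL_mult: "x \<in> LL \<Longrightarrow> y \<in> LL \<Longrightarrow> x * y \<in> LL" unfolding LL_alt using Esub_mult by blast
lemma LL_inv: "x \<in> LL \<Longrightarrow> inverse x \<in> LL" unfolding LL_alt using Esub_inv by blast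
lemma LL_0: "0 \<in> LL" unfolding LL_def using MM_ge9 by simp
lemma LL_1: "1 \<in> LL" unfolding LL_def by simp
lemma FF_add: "x \<in> FF \<Longrightarrow> y \<in> FF \<Longrightarrow> x + y \<in> FF" unfolding FF_alt using Esub_add by blast
lemma FF_diff: "x \<in> FF \<Longrightarrow> y \<in> FF \<Longrightarrow> x - y \<in> FF" unfolding FF_alt using Esub_diff by blast
lemma FF_neg: "x \<in> FF \<Longrightarrow> - x \<in> FF" unfolding FF_alt using Esub_neg by blast
lemma FF_mult: "x \<in> FF \<Longrightarrow> y \<in> FF \<Longrightarrow> x * y \<in> FF" unfolding FF_alt using Esub_mult by blast
lemma FF_inv: "x \<in> FF \<Longrightarrow> inverse x \<in> FF" unfolding FF_alt using Esub_inv by blast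
lemma FF_0: "0 \<in> FF" unfolding FF_def using QQ_ge3 by simp
lemma PF_neg: "x \<in> PF \<Longrightarrow> - x \<in> PF" unfolding PF_alt using Esub_neg by blast
lemma PF_mult: "x \<in> PF \<Longrightarrow> y \<in> PF \<Longrightarrow> x * y \<in> PF" unfolding PF_alt using Esub_mult by blast
lemma PF_inv: "x \<in> PF \<Longrightarrow> inverse x \<in> PF" unfolding PF_alt using Esub_inv by blast
lemma PF_of_nat: "of_nat k \<in> PF" unfolding PF_def using of_nat_pow_p by simp

lemma PF_pow: assumes "x \<in> PF" shows "x ^ (p ^ k) = x"
proof (induction k)
  case (Suc k)
  have "x ^ (p ^ Suc k) = (x ^ (p ^ k)) ^ p" by (simp add: power_mult[symmetric] mult.commute)
  thus ?case using Suc assms unfolding PF_def by simp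
qed simp

lemma PF_LL: "x \<in> PF \<Longrightarrow> x \<in> LL" unfolding LL_alt using PF_pow by blast

lemma subfield_param: assumes "m \<ge> 2" "(m - 1) dvd nn"
  shows "{x::'a. x ^ m = x} - {0} = (\<lambda>i. g ^ (nn div (m - 1) * i)) ` {..<m - 1}"
    and "inj_on (\<lambda>i. g ^ (nn div (m - 1) * i)) {..<m - 1}"
    and "\<And>i. i < m - 1 \<Longrightarrow> ind (g ^ (nn div (m - 1) * i)) = nn div (m - 1) * i"
proof -
  define d where "d = nn div (m - 1)"
  have nnd: "nn = (m - 1) * d" using assms d_def by simp
  have dpos: "d > 0" using nnd nn_pos by (cases d) auto
  have lt: "d * i < nn" if "i < m - 1" for i using that nnd dpos by (simp add: mult.commute)
  show ind_eq: "\<And>i. i < m - 1 \<Longrightarrow> ind (g ^ (nn div (m - 1) * i)) = nn div (m - 1) * i"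
    using lt ind_gpow d_def by simp
  show "inj_on (\<lambda>i. g ^ (nn div (m - 1) * i)) {..<m - 1}"
  proof (rule inj_onI)
    fix a b assume ab: "a \<in> {..<m - 1}" "b \<in> {..<m - 1}" "g ^ (nn div (m - 1) * a) = g ^ (nn div (m - 1) * b)"
    hence "ind (g ^ (nn div (m - 1) * a)) = ind (g ^ (nn div (m - 1) * b))" by simp
    moreover have "ind (g ^ (nn div (m - 1) * a)) = nn div (m - 1) * a" by (rule ind_eq) (use ab(1) in auto)
    moreover have "ind (g ^ (nn div (m - 1) * b)) = nn div (m - 1) * b" by (rule ind_eq) (use ab(2) in auto)
    ultimately have "d * a = d * b" using d_def by simp
    thus "a = b" using dpos by simp
  qed
  show "{x::'a. x ^ m = x} - {0} = (\<lambda>i. g ^ (nn div (m - 1) * i)) ` {..<m - 1}"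
  proof (intro equalityI subsetI)
    fix x :: 'a assume "x \<in> {x. x ^ m = x} - {0}"
    hence x: "x ^ m = x" "x \<noteq> 0" by auto
    hence "d dvd ind x" using subfield_mem assms d_def by auto
    then obtain i where i: "ind x = d * i" by blast
    have "d * i < d * (m - 1)" using ind_props[OF x(2)] i nnd by (simp add: mult.commute)
    hence "i < m - 1" using dpos by simp
    thus "x \<in> (\<lambda>i. g ^ (nn div (m - 1) * i)) ` {..<m - 1}" using ind_props(2)[OF x(2)] i d_def by auto
  next
    fix x :: 'a assume "x \<in> (\<lambda>i. g ^ (nn div (m - 1) * i)) ` {..<m - 1}"
    then obtain i where i: "i < m - 1" "x = g ^ (d * i)" using d_def by auto
    have "x \<noteq> 0" using i by simp
    moreover have "ind x = d * i" using i lt ind_gpow by simp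
    ultimately show "x \<in> {x. x ^ m = x} - {0}" using subfield_mem[OF assms(1,2), of x] d_def by auto
  qed
qed

lemma nn_div_MM1: "nn div (MM - 1) = MM + 1"
proof -
  have "MM - 1 \<noteq> 0" using MM_ge9 by simp
  thus ?thesis unfolding nn_eq by (metis nonzero_mult_div_cancel_left)
qed

lemma LL_param: "LL - {0} = (\<lambda>i. g ^ ((MM + 1) * i)) ` {..<MM - 1}"
  "inj_on (\<lambda>i. g ^ ((MM + 1) * i)) {..<MM - 1}"
  "\<And>i. i < MM - 1 \<Longrightarrow> ind (g ^ ((MM + 1) * i)) = (MM + 1) * i"
  using subfield_param[of MM] MM_ge9 MM1_dvd nn_div_MM1 unfolding LL_def by auto

lemma LL_ind: assumes "x \<in> LL" "x \<noteq> 0" shows "(MM + 1) dvd ind x"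
  using subfield_mem[of MM x] assms MM_ge9 MM1_dvd nn_div_MM1 unfolding LL_def by auto

lemma LL_iff_ind: assumes "x \<noteq> 0" shows "x \<in> LL \<longleftrightarrow> (MM + 1) dvd ind x"
  using subfield_mem[of MM x] assms MM_ge9 MM1_dvd nn_div_MM1 unfolding LL_def by auto

definition zeta :: complex where "zeta = cis (2 * pi / real p)"

lemma zeta_p: "zeta ^ p = 1"
proof -
  have "zeta ^ p = cis (real p * (2 * pi / real p))" unfolding zeta_def by (rule DeMoivre)
  also have "real p * (2 * pi / real p) = 2 * pi" using p_ge3 by simp
  finally show ?thesis by simp
qed

lemma zeta_pow_mod: "zeta ^ k = zeta ^ (k mod p)"
proof -
  have "zeta ^ k = zeta ^ (p * (k div p) + k mod p)" by simp
  also have "\<dots> = (zeta ^ p) ^ (k div p) * zeta ^ (k mod p)" by (simp only: power_add power_mult)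
  finally show ?thesis using zeta_p by simp
qed

lemma zeta_pow_neq1: assumes "0 < k" "k < p" shows "zeta ^ k \<noteq> 1"
proof
  assume "zeta ^ k = 1"
  hence "cis (real k * (2 * pi / real p)) = 1" unfolding zeta_def by (simp add: DeMoivre)
  hence "cos (real k * (2 * pi / real p)) = 1" by (metis cis.sel(1) one_complex.sel(1))
  then obtain m :: int where m: "real k * (2 * pi / real p) = real_of_int m * 2 * pi"
    using cos_one_2pi_int by blast
  have "real k = real_of_int m * real p" using m p_ge3 by (simp add: field_simps)
  hence "int k = m * int p" by (metis of_int_eq_iff of_int_mult of_int_of_nat_eq)
  moreover have "int k > 0" "int k < int p" using assms by auto
  ultimately show False
  proof (cases "m \<le> 0")
    case True
    hence "m * int p \<le> 0" by (simp add: mult_nonpos_nonneg)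
    thus False using \<open>int k = m * int p\<close> \<open>int k > 0\<close> by simp
  next
    case False
    hence "1 * int p \<le> m * int p" by (intro mult_right_mono) auto
    hence "int p \<le> m * int p" by simp
    thus False using \<open>int k = m * int p\<close> \<open>int k < int p\<close> by linarith
  qed
qed

definition psiK :: "'a \<Rightarrow> complex" where "psiK x = zeta ^ idx (TK x)"
definition psiL :: "'a \<Rightarrow> complex" where "psiL x = zeta ^ idx (TL x)"

lemma Tr_0: "Tr d 0 = 0" unfolding Tr_def using p_ge3 by (simp add: power_0_left)

lemma psiK_add: "psiK (x + y) = psiK x * psiK y"
proof -
  have "idx (TK (x + y)) = (idx (TK x) + idx (TK y)) mod p"
    unfolding Tr_add by (rule idx_add[OF TK_PF TK_PF])
  thus ?thesis unfolding psiK_def by (metis zeta_pow_mod power_add)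
qed

lemma psiL_add: "x \<in> LL \<Longrightarrow> y \<in> LL \<Longrightarrow> psiL (x + y) = psiL x * psiL y"
proof -
  assume xy: "x \<in> LL" "y \<in> LL"
  have "idx (TL (x + y)) = (idx (TL x) + idx (TL y)) mod p"
    unfolding Tr_add by (rule idx_add[OF TL_PF[OF xy(1)] TL_PF[OF xy(2)]])
  thus ?thesis unfolding psiL_def by (metis zeta_pow_mod power_add)
qed

lemma psiK_0: "psiK 0 = 1" unfolding psiK_def Tr_0 idx_0 by simp
lemma psiL_0: "psiL 0 = 1" unfolding psiL_def Tr_0 idx_0 by simp

lemma psiK_TL: "psiK x = psiL (x + x ^ MM)" unfolding psiK_def psiL_def TK_TL ..
lemma psiK_frob: "psiK (x ^ p) = psiK x" unfolding psiK_def TK_frob ..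
lemma psiL_frob: "x \<in> LL \<Longrightarrow> psiL (x ^ p) = psiL x" unfolding psiL_def using TL_frob by simp

lemma psi_neq1: assumes "t \<in> PF" "t \<noteq> 0" shows "zeta ^ idx t \<noteq> 1"
proof -
  have "idx t \<noteq> 0"
  proof
    assume "idx t = 0"
    hence "(of_nat (idx t) :: 'a) = 0" by simp
    thus False using idx_props(2)[OF assms(1)] assms(2) by simp
  qed
  thus ?thesis using zeta_pow_neq1 idx_props(1)[OF assms(1)] by simp
qed

lemma sumK_psi: "(\<Sum>x\<in>UNIV. psiK x) = 0"
proof -
  obtain a where a: "TK a \<noteq> 0" using TK_nontriv by blast
  have na: "psiK a \<noteq> 1" unfolding psiK_def using psi_neq1[OF TK_PF a] .
  have "(\<Sum>x\<in>UNIV. psiK x) = (\<Sum>x\<in>UNIV. psiK (x + a))"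
    by (rule sum.reindex_bij_witness[of _ "\<lambda>x. x + a" "\<lambda>x. x - a"]) auto
  also have "\<dots> = psiK a * (\<Sum>x\<in>UNIV. psiK x)" by (simp add: psiK_add sum_distrib_left mult.commute)
  finally have "(1 - psiK a) * (\<Sum>x\<in>UNIV. psiK x) = 0" by (simp add: algebra_simps)
  thus ?thesis using na by simp
qed

lemma sumK_psi_mult: "(\<Sum>y\<in>UNIV. psiK (y * z)) = (if z = 0 then of_nat qq else 0)"
proof (cases "z = 0")
  case True thus ?thesis using card_UNIV psiK_0 by simp
next
  case False
  have "(\<Sum>y\<in>UNIV. psiK (y * z)) = (\<Sum>x\<in>UNIV. psiK x)"
    by (rule sum.reindex_bij_witness[of _ "\<lambda>x. x / z" "\<lambda>y. y * z"]) (use False in auto)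
  thus ?thesis using sumK_psi False by simp
qed

lemma sumL_psi: "(\<Sum>x\<in>LL. psiL x) = 0"
proof -
  obtain a where a: "a \<in> LL" "TL a \<noteq> 0" using TL_nontriv by blast
  have na: "psiL a \<noteq> 1" unfolding psiL_def using psi_neq1[OF TL_PF[OF a(1)] a(2)] .
  have "(\<Sum>x\<in>LL. psiL x) = (\<Sum>x\<in>LL. psiL (x + a))"
    by (rule sum.reindex_bij_witness[of _ "\<lambda>x. x + a" "\<lambda>x. x - a"]) (use a LL_add LL_diff in auto)
  also have "\<dots> = (\<Sum>x\<in>LL. psiL a * psiL x)"
    by (rule sum.cong) (use a psiL_add in \<open>auto simp: mult.commute\<close>)
  also have "\<dots> = psiL a * (\<Sum>x\<in>LL. psiL x)" by (simp add: sum_distrib_left)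
  finally have "(1 - psiL a) * (\<Sum>x\<in>LL. psiL x) = 0" by (simp add: algebra_simps)
  thus ?thesis using na by simp
qed

lemma sumL_psi_mult: assumes "z \<in> LL"
  shows "(\<Sum>y\<in>LL. psiL (y * z)) = (if z = 0 then of_nat MM else 0)"
proof (cases "z = 0")
  case True thus ?thesis using card_LL psiL_0 by simp
next
  case False
  have "(\<Sum>y\<in>LL. psiL (y * z)) = (\<Sum>x\<in>LL. psiL x)"
    by (rule sum.reindex_bij_witness[of _ "\<lambda>x. x / z" "\<lambda>y. y * z"])
       (use False assms LL_mult LL_inv in \<open>auto simp: divide_inverse\<close>)
  thus ?thesis using sumL_psi False by simp
qed

lemma sumL_psi_mult': assumes "z \<in> LL"
  shows "(\<Sum>y\<in>LL - {0}. psiL (y * z)) = (if z = 0 then of_nat MM else 0) - 1"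
proof -
  have "(\<Sum>y\<in>LL. psiL (y * z)) = psiL (0 * z) + (\<Sum>y\<in>LL - {0}. psiL (y * z))"
    using LL_0 by (simp add: sum.remove)
  thus ?thesis using sumL_psi_mult[OF assms] psiL_0 by simp
qed

end

lemma i_pow_mod: "\<i> ^ k = \<i> ^ (k mod 4)"
proof -
  have "\<i> ^ k = \<i> ^ (4 * (k div 4) + k mod 4)" by simp
  also have "\<dots> = (\<i> ^ 4) ^ (k div 4) * \<i> ^ (k mod 4)" by (simp only: power_add power_mult)
  finally show ?thesis by simp
qed

lemma i_pow_cong: "a mod 4 = b mod 4 \<Longrightarrow> \<i> ^ a = \<i> ^ b"
  by (metis i_pow_mod)

lemma i_pow_neq1: "a mod 4 \<noteq> 0 \<Longrightarrow> \<i> ^ a \<noteq> 1"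
proof -
  assume "a mod 4 \<noteq> 0"
  hence "a mod 4 = 1 \<or> a mod 4 = 2 \<or> a mod 4 = 3" by linarith
  moreover have "\<i> ^ 3 = - \<i>" by (simp add: power3_eq_cube)
  moreover have "- \<i> \<noteq> 1" by (simp add: complex_eq_iff)
  moreover have "\<i> ^ 2 \<noteq> 1" by simp
  moreover have "\<i> ^ 1 \<noteq> 1" by (simp add: complex_eq_iff)
  ultimately show ?thesis using i_pow_mod[of a] by metis
qed

lemma mod4_mult_mod: "(4::nat) dvd N \<Longrightarrow> (j * (c mod N)) mod 4 = (j * c) mod 4"
  by (metis mod_mod_cancel mod_mult_right_eq)

context pgraph begin

definition MP :: nat where "MP = MM + 1"
definition MN :: nat where "MN = MM - 1"
lemma nn_MP: "nn = MN * MP" unfolding MN_def MP_def by (rule nn_eq)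
lemma MP_pos: "MP > 0" unfolding MP_def by simp
lemma MN_pos: "MN > 0" unfolding MN_def using MM_ge9 by simp
lemma MP_nz[simp]: "MP \<noteq> 0" unfolding MP_def by simp
lemma four_dvd_MN: "4 dvd MN" unfolding MN_def by (rule four_dvd_MM1)
lemma LL_param': "LL - {0} = (\<lambda>i. g ^ (MP * i)) ` {..<MN}"
  "inj_on (\<lambda>i. g ^ (MP * i)) {..<MN}"
  "\<And>i. i < MN \<Longrightarrow> ind (g ^ (MP * i)) = MP * i"
  using LL_param unfolding MP_def MN_def by auto
lemma LL_ind': "x \<in> LL \<Longrightarrow> x \<noteq> 0 \<Longrightarrow> MP dvd ind x" unfolding MP_def by (rule LL_ind)
lemma LL_iff_ind': "x \<noteq> 0 \<Longrightarrow> x \<in> LL \<longleftrightarrow> MP dvd ind x" unfolding MP_def by (rule LL_iff_ind)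

definition chiK :: "nat \<Rightarrow> 'a \<Rightarrow> complex" where
  "chiK j x = (if x = 0 then 0 else \<i> ^ (j * ind x))"
definition indL :: "'a \<Rightarrow> nat" where "indL x = ind x div MP"
definition chiL :: "nat \<Rightarrow> 'a \<Rightarrow> complex" where
  "chiL j x = (if x = 0 then 0 else \<i> ^ (j * indL x))"

lemma chiK_0[simp]: "chiK j 0 = 0" unfolding chiK_def by simp
lemma chiL_0[simp]: "chiL j 0 = 0" unfolding chiL_def by simp

lemma chiK_mult: "chiK j (x * y) = chiK j x * chiK j y"
proof (cases "x = 0 \<or> y = 0")
  case False
  hence xy: "x \<noteq> 0" "y \<noteq> 0" by auto
  have "(j * ind (x * y)) mod 4 = (j * (ind x + ind y)) mod 4"
    unfolding ind_mult[OF xy] by (rule mod4_mult_mod[OF four_dvd_nn])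
  hence "\<i> ^ (j * ind (x * y)) = \<i> ^ (j * (ind x + ind y))" by (rule i_pow_cong)
  hence "\<i> ^ (j * ind (x * y)) = \<i> ^ (j * ind x) * \<i> ^ (j * ind y)"
    by (simp add: distrib_left power_add)
  thus ?thesis unfolding chiK_def using xy by simp
qed (auto simp: chiK_def)

lemma chiK_add_idx: "chiK a x * chiK b x = chiK (a + b) x"
  unfolding chiK_def by (simp add: distrib_right power_add)

lemma mod4_mult_left: "a mod 4 = b mod 4 \<Longrightarrow> (a * k) mod 4 = (b * k) mod (4::nat)"
  by (metis mod_mult_left_eq)

lemma chiK_cong: assumes "a mod 4 = b mod 4" shows "chiK a x = chiK b x"
proof -
  have "\<i> ^ (a * ind x) = \<i> ^ (b * ind x)" by (rule i_pow_cong) (rule mod4_mult_left[OF assms])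
  thus ?thesis unfolding chiK_def by simp
qed

lemma chiL_cong: assumes "a mod 4 = b mod 4" shows "chiL a x = chiL b x"
proof -
  have "\<i> ^ (a * indL x) = \<i> ^ (b * indL x)" by (rule i_pow_cong) (rule mod4_mult_left[OF assms])
  thus ?thesis unfolding chiL_def by simp
qed

lemma chiL_add_idx: "chiL a x * chiL b x = chiL (a + b) x"
  unfolding chiL_def by (simp add: distrib_right power_add)

lemma chiK_triv: "x \<noteq> 0 \<Longrightarrow> a mod 4 = 0 \<Longrightarrow> chiK a x = 1"
  using chiK_cong[of a 0 x] unfolding chiK_def by simp
lemma chiL_triv: "x \<noteq> 0 \<Longrightarrow> a mod 4 = 0 \<Longrightarrow> chiL a x = 1"
  using chiL_cong[of a 0 x] unfolding chiL_def by simp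

lemma indL_props: assumes "x \<in> LL" "x \<noteq> 0" shows "ind x = MP * indL x" "indL x < MN"
proof -
  show e: "ind x = MP * indL x" unfolding indL_def using LL_ind'[OF assms] by simp
  have "MP * indL x < MP * MN" using ind_props(1)[OF assms(2)] e nn_MP by (simp only: mult.commute[of MN])
  thus "indL x < MN" by simp
qed

lemma MMmod: "(MP * a) mod nn = MP * (a mod MN)"
proof -
  have "MP * (a mod MN) = (MP * a) mod (MP * MN)" by (rule mult_mod_right)
  moreover have "MP * MN = nn" using nn_MP by simp
  ultimately show ?thesis by simp
qed

lemma indL_eqI: assumes "x \<noteq> 0" "ind x = MP * k" shows "indL x = k"
  unfolding indL_def using assms by simp

lemma indL_mult: assumes "x \<in> LL" "y \<in> LL" "x \<noteq> 0" "y \<noteq> 0"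
  shows "indL (x * y) = (indL x + indL y) mod MN"
proof -
  have "ind (x * y) = (MP * (indL x + indL y)) mod nn"
    using ind_mult[OF assms(3,4)] indL_props(1)[OF assms(1,3)] indL_props(1)[OF assms(2,4)]
    by (simp add: distrib_left)
  thus ?thesis using MMmod indL_eqI[of "x * y"] assms by simp
qed

lemma chiL_mult: assumes "x \<in> LL" "y \<in> LL" shows "chiL j (x * y) = chiL j x * chiL j y"
proof (cases "x = 0 \<or> y = 0")
  case False
  hence xy: "x \<noteq> 0" "y \<noteq> 0" by auto
  have "(j * indL (x * y)) mod 4 = (j * (indL x + indL y)) mod 4"
    unfolding indL_mult[OF assms xy] by (rule mod4_mult_mod[OF four_dvd_MN])
  hence "\<i> ^ (j * indL (x * y)) = \<i> ^ (j * (indL x + indL y))" by (rule i_pow_cong)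
  hence "\<i> ^ (j * indL (x * y)) = \<i> ^ (j * indL x) * \<i> ^ (j * indL y)"
    by (simp add: distrib_left power_add)
  thus ?thesis unfolding chiL_def using xy by simp
qed (auto simp: chiL_def)

lemma chiL_param: assumes "i < MN" shows "chiL j (g ^ (MP * i)) = \<i> ^ (j * i)"
proof -
  have "indL (g ^ (MP * i)) = i" using indL_eqI LL_param'(3)[OF assms] by simp
  thus ?thesis unfolding chiL_def by simp
qed

lemma chiL_sum: assumes "j mod 4 \<noteq> 0" shows "(\<Sum>y\<in>LL. chiL j y) = 0"
proof -
  have "(\<Sum>y\<in>LL. chiL j y) = chiL j 0 + (\<Sum>y\<in>LL - {0}. chiL j y)" using LL_0 by (simp add: sum.remove)
  also have "(\<Sum>y\<in>LL - {0}. chiL j y) = (\<Sum>i<MN. chiL j (g ^ (MP * i)))"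
    unfolding LL_param'(1) by (rule sum.reindex[OF LL_param'(2), unfolded comp_def])
  also have "\<dots> = (\<Sum>i<MN. (\<i> ^ j) ^ i)" using chiL_param by (simp add: power_mult)
  also have "\<dots> = ((\<i> ^ j) ^ MN - 1) / (\<i> ^ j - 1)" using i_pow_neq1[OF assms] by (rule geometric_sum)
  also have "(\<i> ^ j) ^ MN = 1"
  proof -
    have "(\<i> ^ j) ^ MN = \<i> ^ (j * MN)" by (simp add: power_mult)
    also have "\<dots> = \<i> ^ 0" using four_dvd_MN by (intro i_pow_cong) simp
    finally show ?thesis by simp
  qed
  finally show ?thesis by simp
qed

lemma four_p1_dvd: "4 * (p - 1) dvd MM - 1"
proof -
  have "4 dvd p + 1" using p_mod by presburger
  then obtain c where c: "p + 1 = 4 * c" by blast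
  have "(p - 1) * (p + 1) = 4 * (p - 1) * c" using c by simp
  hence "4 * (p - 1) dvd (p - 1) * (p + 1)" by simp
  moreover have "(p - 1) * (p + 1) = p ^ 2 - 1" using p_ge3 by (cases p) (simp_all add: power2_eq_square algebra_simps)
  ultimately have "[p ^ 2 = 1] (mod 4 * (p - 1))" using p_ge3
    by (simp add: cong_altdef_nat)
  hence "[(p ^ 2) ^ r = 1 ^ r] (mod 4 * (p - 1))" by (rule cong_pow)
  hence "[MM = 1] (mod 4 * (p - 1))" unfolding MM_def by (simp add: power_mult)
  thus ?thesis using MM_ge9 by (simp add: cong_altdef_nat)
qed

lemma chiL_PF: assumes "c \<in> PF" "c \<noteq> 0" shows "chiL j c = 1"
proof -
  obtain w where w: "MN = 4 * (p - 1) * w" using four_p1_dvd unfolding MN_def by blast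
  have "nn div (p - 1) dvd ind c" using subfield_mem[of p c] assms p_ge3 p1_dvd unfolding PF_def by auto
  moreover have "nn div (p - 1) = MP * (4 * w)"
  proof -
    have "nn = (p - 1) * (MP * (4 * w))" using w nn_MP by (simp add: ac_simps)
    thus ?thesis using p_ge3 by simp
  qed
  ultimately have "MP * (4 * w) dvd ind c" by simp
  then obtain u where "ind c = MP * (4 * w) * u" by (elim dvdE)
  hence u: "ind c = MP * (4 * w * u)" by (simp only: mult.assoc)
  have "indL c = 4 * w * u" using indL_eqI[OF assms(2) u] .
  have "\<i> ^ (j * (4 * w * u)) = \<i> ^ 0" by (rule i_pow_cong) simp
  thus ?thesis unfolding chiL_def using assms(2) \<open>indL c = 4 * w * u\<close> by simp
qed

lemma chiL_neg1: "chiL j (- 1) = 1" using chiL_PF PF_neg[OF PF_of_nat[of 1]] by simp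

lemma chiL_neg: assumes "x \<in> LL" shows "chiL j (- x) = chiL j x"
proof -
  have "chiL j (- x) = chiL j (- 1 * x)" by simp
  also have "\<dots> = chiL j (- 1) * chiL j x" by (rule chiL_mult) (use assms LL_neg LL_1 in auto)
  finally show ?thesis using chiL_neg1 by simp
qed

lemma chiL_frob: assumes "y \<in> LL" shows "chiL j (y ^ p) = chiL (3 * j) y"
proof (cases "y = 0")
  case False
  have yp: "y ^ p \<noteq> 0" using False by simp
  have "ind (y ^ p) = (MP * (indL y * p)) mod nn"
    using ind_pow[OF False] indL_props(1)[OF assms False] by (simp add: mult.assoc)
  hence "indL (y ^ p) = (indL y * p) mod MN" using MMmod indL_eqI[OF yp] by simp
  hence "(j * indL (y ^ p)) mod 4 = (j * (indL y * p)) mod 4" using mod4_mult_mod[OF four_dvd_MN] by simp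
  also have "\<dots> = (3 * j * indL y) mod 4"
  proof -
    have A: "(j * indL y * p) mod 4 = (j * indL y * (p mod 4)) mod 4" by (simp only: mod_mult_right_eq)
    have B: "j * (indL y * p) = j * indL y * p" by (simp only: mult.assoc)
    have "(j * (indL y * p)) mod 4 = (j * indL y * (p mod 4)) mod 4" by (simp only: B A)
    also have "\<dots> = (j * indL y * 3) mod 4" using p_mod by simp
    also have "j * indL y * 3 = 3 * j * indL y" by simp
    finally show ?thesis .
  qed
  finally have "\<i> ^ (j * indL (y ^ p)) = \<i> ^ (3 * j * indL y)" by (rule i_pow_cong)
  thus ?thesis unfolding chiL_def using False yp by simp
qed (use p_ge3 in \<open>simp add: chiL_def power_0_left\<close>)

lemma norm_LL: assumes "x \<noteq> 0" shows "x ^ MP \<in> LL" "x ^ MP \<noteq> 0"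
    "chiL j (x ^ MP) = chiK j x"
proof -
  show nz: "x ^ MP \<noteq> 0" using assms by simp
  have "ind (x ^ MP) = (ind x * MP) mod nn" by (rule ind_pow[OF assms])
  also have "\<dots> = (MP * ind x) mod nn" by (simp only: mult.commute)
  also have "\<dots> = MP * (ind x mod MN)" by (rule MMmod)
  finally have e: "ind (x ^ MP) = MP * (ind x mod MN)" .
  thus "x ^ MP \<in> LL" using LL_iff_ind'[OF nz] by simp
  have "indL (x ^ MP) = ind x mod MN" using indL_eqI[OF nz e] .
  hence "(j * indL (x ^ MP)) mod 4 = (j * ind x) mod 4" using mod4_mult_mod[OF four_dvd_MN] by simp
  hence "\<i> ^ (j * indL (x ^ MP)) = \<i> ^ (j * ind x)" by (rule i_pow_cong)
  thus "chiL j (x ^ MP) = chiK j x" unfolding chiL_def chiK_def using assms nz by simp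
qed

definition GL :: "nat \<Rightarrow> complex" where "GL j = (\<Sum>y\<in>LL. chiL j y * psiL y)"

lemma LL_pow: assumes "y \<in> LL" shows "y ^ k \<in> LL"
proof -
  have "(y ^ k) ^ MM = y ^ (k * MM)" by (rule power_mult[symmetric])
  also have "\<dots> = (y ^ MM) ^ k" by (subst mult.commute) (rule power_mult)
  finally show ?thesis using assms unfolding LL_def by simp
qed

lemma GL_frob: "GL j = GL (3 * j)"
proof -
  define e where "e = p ^ (2 * r - 1)"
  have "p * e = p ^ Suc (2 * r - 1)" unfolding e_def by simp
  moreover have "Suc (2 * r - 1) = 2 * r" using r_pos by simp
  ultimately have pe: "p * e = p ^ (2 * r)" by simp
  have inv1: "(y ^ p) ^ e = y" if "y \<in> LL" for y
  proof -
    have "(y ^ p) ^ e = y ^ (p * e)" by (rule power_mult[symmetric])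
    thus ?thesis using that pe unfolding LL_alt by simp
  qed
  have inv2: "(y ^ e) ^ p = y" if "y \<in> LL" for y
  proof -
    have "(y ^ e) ^ p = y ^ (e * p)" by (rule power_mult[symmetric])
    also have "e * p = p * e" by (rule mult.commute)
    finally show ?thesis using that pe unfolding LL_alt by simp
  qed
  have "GL j = (\<Sum>y\<in>LL. chiL j (y ^ p) * psiL (y ^ p))"
    unfolding GL_def
  proof (rule sum.reindex_bij_witness[of _ "\<lambda>y. y ^ p" "\<lambda>y. y ^ e"])
    fix a assume a: "a \<in> LL"
    show "(a ^ e) ^ p = a" by (rule inv2[OF a])
    show "a ^ e \<in> LL" by (rule LL_pow[OF a])
    show "a ^ p \<in> LL" by (rule LL_pow[OF a])
    show "(a ^ p) ^ e = a" by (rule inv1[OF a])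
    show "chiL j ((a ^ e) ^ p) * psiL ((a ^ e) ^ p) = chiL j a * psiL a" by (simp only: inv2[OF a])
  qed
  also have "\<dots> = GL (3 * j)" unfolding GL_def
  proof (rule sum.cong)
    fix y assume "y \<in> LL"
    thus "chiL j (y ^ p) * psiL (y ^ p) = chiL (3 * j) y * psiL y" using chiL_frob psiL_frob by simp
  qed simp
  finally show ?thesis .
qed

end

context pgraph begin

lemma GL_prod: "GL a * GL b = (\<Sum>x\<in>LL. \<Sum>y\<in>LL. chiL a x * chiL b y * psiL (x + y))"
proof -
  have "GL a * GL b = (\<Sum>x\<in>LL. \<Sum>y\<in>LL. (chiL a x * psiL x) * (chiL b y * psiL y))"
    unfolding GL_def by (rule sum_product)
  also have "\<dots> = (\<Sum>x\<in>LL. \<Sum>y\<in>LL. chiL a x * chiL b y * psiL (x + y))"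
  proof (rule sum.cong[OF refl], rule sum.cong[OF refl])
    fix x y assume "x \<in> LL" "y \<in> LL"
    hence "psiL (x + y) = psiL x * psiL y" by (rule psiL_add)
    thus "chiL a x * psiL x * (chiL b y * psiL y) = chiL a x * chiL b y * psiL (x + y)"
      by (simp add: ac_simps)
  qed
  finally show ?thesis .
qed

lemma sum_delta_LL: "c \<in> LL \<Longrightarrow> (\<Sum>u\<in>LL. if u = c then f u else 0) = (f c :: complex)"
  by (simp add: sum.delta)

lemma GG: assumes "(a + b) mod 4 = 0" "a mod 4 \<noteq> 0" shows "GL a * GL b = of_nat MM"
proof -
  have inner: "(\<Sum>x\<in>LL. chiL a x * chiL b y * psiL (x + y)) =
      (if y = 0 then 0 else (\<Sum>u\<in>LL. chiL a (- u) * psiL (y * (1 - u))))" if y: "y \<in> LL" for y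
  proof (cases "y = 0")
    case True thus ?thesis by simp
  next
    case False
    have "(\<Sum>u\<in>LL. chiL a (- u) * psiL (y * (1 - u))) = (\<Sum>x\<in>LL. chiL a x * chiL b y * psiL (x + y))"
    proof (rule sum.reindex_bij_witness[of _ "\<lambda>x. - (x / y)" "\<lambda>u. - (u * y)"])
      fix u assume u: "u \<in> LL"
      show "- (- (u * y) / y) = u" using False by simp
      show "- (u * y) \<in> LL" using u y LL_mult LL_neg by blast
      have "chiL a (- (u * y)) * chiL b y = chiL a u * (chiL a y * chiL b y)"
        using chiL_neg[of "u * y" a] chiL_mult[OF u y, of a] u y LL_mult by (simp add: ac_simps)
      also have "chiL a y * chiL b y = 1" using chiL_add_idx chiL_triv[OF False assms(1)] by simp
      finally have c1: "chiL a (- (u * y)) * chiL b y = chiL a (- u)" using chiL_neg[OF u] by simp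
      have "- (u * y) + y = y * (1 - u)" by (simp add: algebra_simps)
      thus "chiL a (- (u * y)) * chiL b y * psiL (- (u * y) + y) = chiL a (- u) * psiL (y * (1 - u))"
        using c1 by simp
    next
      fix x assume x: "x \<in> LL"
      show "- (- (x / y) * y) = x" using False by simp
      show "- (x / y) \<in> LL" using x y LL_mult LL_inv LL_neg by (simp add: divide_inverse)
    qed
    thus ?thesis using False by simp
  qed
  have "GL a * GL b = (\<Sum>y\<in>LL. \<Sum>x\<in>LL. chiL a x * chiL b y * psiL (x + y))"
    unfolding GL_prod by (rule sum.swap)
  also have "\<dots> = (\<Sum>y\<in>LL. if y = 0 then 0 else (\<Sum>u\<in>LL. chiL a (- u) * psiL (y * (1 - u))))"
    by (rule sum.cong[OF refl]) (rule inner)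
  also have "\<dots> = (\<Sum>y\<in>LL - {0}. \<Sum>u\<in>LL. chiL a (- u) * psiL (y * (1 - u)))"
    by (rule sum.mono_neutral_cong_right) auto
  also have "\<dots> = (\<Sum>u\<in>LL. chiL a (- u) * (\<Sum>y\<in>LL - {0}. psiL (y * (1 - u))))"
    by (subst sum.swap) (simp add: sum_distrib_left)
  also have "\<dots> = (\<Sum>u\<in>LL. chiL a (- u) * ((if 1 - u = 0 then of_nat MM else 0) - 1))"
  proof (rule sum.cong[OF refl])
    fix u assume "u \<in> LL"
    hence "1 - u \<in> LL" using LL_diff LL_1 by blast
    thus "chiL a (- u) * (\<Sum>y\<in>LL - {0}. psiL (y * (1 - u))) =
          chiL a (- u) * ((if 1 - u = 0 then of_nat MM else 0) - 1)"
      using sumL_psi_mult' by simp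
  qed
  also have "\<dots> = (\<Sum>u\<in>LL. (if u = 1 then chiL a (- u) * of_nat MM else 0) - chiL a (- u))"
  proof (rule sum.cong[OF refl])
    fix u :: 'a
    have "(1 - u = 0) = (u = 1)" by auto
    thus "chiL a (- u) * ((if 1 - u = 0 then of_nat MM else 0) - 1) =
        (if u = 1 then chiL a (- u) * of_nat MM else 0) - chiL a (- u)" by (simp add: algebra_simps)
  qed
  also have "\<dots> = (\<Sum>u\<in>LL. if u = 1 then chiL a (- u) * of_nat MM else 0) - (\<Sum>u\<in>LL. chiL a (- u))"
    by (rule sum_subtractf)
  also have "(\<Sum>u\<in>LL. chiL a (- u)) = (\<Sum>u\<in>LL. chiL a u)"
    by (rule sum.cong[OF refl]) (rule chiL_neg)
  also have "\<dots> = 0" using chiL_sum[OF assms(2)] .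
  also have "(\<Sum>u\<in>LL. if u = 1 then chiL a (- u) * of_nat MM else 0) = chiL a (- 1) * of_nat MM"
    using LL_1 by (simp add: sum.delta)
  finally show ?thesis using chiL_neg1 by simp
qed

definition JL :: "nat \<Rightarrow> nat \<Rightarrow> complex" where "JL a b = (\<Sum>m\<in>LL. chiL a m * chiL b (1 - m))"

lemma Jacobi: assumes "a mod 4 \<noteq> 0" "b mod 4 \<noteq> 0" "(a + b) mod 4 \<noteq> 0"
  shows "GL a * GL b = JL a b * GL (a + b)"
proof -
  define H where "H s = (\<Sum>x\<in>LL. chiL a x * chiL b (s - x))" for s
  have Hs: "H s = chiL (a + b) s * JL a b" if s: "s \<in> LL" for s
  proof (cases "s = 0")
    case True
    have "H s = (\<Sum>x\<in>LL. chiL (a + b) x)" unfolding H_def True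
      by (rule sum.cong[OF refl]) (simp add: chiL_neg chiL_add_idx)
    also have "\<dots> = 0" using chiL_sum[OF assms(3)] .
    finally show ?thesis using True by simp
  next
    case False
    have "(\<Sum>m\<in>LL. chiL a (s * m) * chiL b (s - s * m)) = H s" unfolding H_def
    proof (rule sum.reindex_bij_witness[of _ "\<lambda>x. x / s" "\<lambda>m. s * m"])
      fix m assume "m \<in> LL" thus "s * m / s = m" "s * m \<in> LL" using False s LL_mult by auto
    next
      fix x assume "x \<in> LL" thus "s * (x / s) = x" "x / s \<in> LL"
        using False s LL_mult LL_inv by (auto simp: divide_inverse)
    qed simp
    hence "H s = (\<Sum>m\<in>LL. chiL a (s * m) * chiL b (s - s * m))" by simp
    also have "\<dots> = (\<Sum>m\<in>LL. (chiL a s * chiL b s) * (chiL a m * chiL b (1 - m)))"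
    proof (rule sum.cong[OF refl])
      fix m assume m: "m \<in> LL"
      have m1: "1 - m \<in> LL" using m LL_diff LL_1 by blast
      have "s - s * m = s * (1 - m)" by (simp add: algebra_simps)
      thus "chiL a (s * m) * chiL b (s - s * m) = (chiL a s * chiL b s) * (chiL a m * chiL b (1 - m))"
        using chiL_mult[OF s m, of a] chiL_mult[OF s m1, of b] by (simp add: ac_simps)
    qed
    also have "\<dots> = chiL (a + b) s * JL a b" unfolding JL_def
      by (simp add: sum_distrib_left chiL_add_idx)
    finally show ?thesis .
  qed
  have "GL a * GL b = (\<Sum>x\<in>LL. \<Sum>s\<in>LL. chiL a x * chiL b (s - x) * psiL s)"
    unfolding GL_prod
  proof (rule sum.cong[OF refl])
    fix x assume x: "x \<in> LL"
    show "(\<Sum>y\<in>LL. chiL a x * chiL b y * psiL (x + y)) = (\<Sum>s\<in>LL. chiL a x * chiL b (s - x) * psiL s)"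
    proof (rule sum.reindex_bij_witness[of _ "\<lambda>s. s - x" "\<lambda>y. x + y"])
      fix y assume "y \<in> LL" thus "x + y - x = y" "x + y \<in> LL" using x LL_add by auto
    next
      fix s assume "s \<in> LL" thus "x + (s - x) = s" "s - x \<in> LL" using x LL_diff by auto
    qed simp
  qed
  also have "\<dots> = (\<Sum>s\<in>LL. psiL s * H s)"
    unfolding H_def by (subst sum.swap) (simp add: sum_distrib_left ac_simps)
  also have "\<dots> = (\<Sum>s\<in>LL. JL a b * (chiL (a + b) s * psiL s))"
    by (rule sum.cong[OF refl]) (simp add: Hs ac_simps)
  also have "\<dots> = JL a b * GL (a + b)" unfolding GL_def by (simp add: sum_distrib_left)
  finally show ?thesis .
qed

lemma GL1_sq: "GL 1 * GL 1 = of_nat MM"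
proof -
  have "GL 1 * GL 3 = of_nat MM" by (rule GG) simp_all
  moreover have "GL 3 = GL 1" using GL_frob[of 1] by simp
  ultimately show ?thesis by simp
qed

lemma GL2_sq: "GL 2 * GL 2 = of_nat MM" by (rule GG) simp_all

lemma GL1_nz: "GL 1 \<noteq> 0" using GL1_sq MM_ge9 by auto

lemma JL12: "JL 1 2 = GL 2"
proof -
  have "GL 1 * GL 2 = JL 1 2 * GL (1 + 2)" by (rule Jacobi) simp_all
  moreover have "(1::nat) + 2 = 3" by simp
  ultimately have "GL 1 * GL 2 = JL 1 2 * GL 3" by (simp only:)
  moreover have "GL 3 = GL 1" using GL_frob[of 1] by simp
  ultimately have "GL 1 * (GL 2 - JL 1 2) = 0" by (simp add: algebra_simps)
  thus ?thesis using GL1_nz by simp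
qed

lemma GL5: "GL 5 = GL 1"
  unfolding GL_def by (rule sum.cong[OF refl]) (simp add: chiL_cong[of 5 1])

lemma JL32: "JL 3 2 = GL 2"
proof -
  have "GL 3 * GL 2 = JL 3 2 * GL (3 + 2)" by (rule Jacobi) simp_all
  moreover have "(3::nat) + 2 = 5" by simp
  ultimately have "GL 3 * GL 2 = JL 3 2 * GL 5" by (simp only:)
  moreover have "GL 3 = GL 1" using GL_frob[of 1] by simp
  ultimately have "GL 1 * (GL 2 - JL 3 2) = 0" using GL5 by (simp add: algebra_simps)
  thus ?thesis using GL1_nz by simp
qed

end

context pgraph begin

lemma two_nz: "(2::'a) \<noteq> 0"
proof
  assume "(2::'a) = 0"
  hence "(of_nat 2 :: 'a) = of_nat 0" by simp
  hence "2 mod p = 0 mod p" by (simp only: of_nat_eq_iff)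
  thus False using p_ge3 by simp
qed

lemma four_nz: "(4::'a) \<noteq> 0"
proof -
  have "(2::'a) * 2 \<noteq> 0" using two_nz mult_eq_0_iff[of "2::'a" 2] by blast
  thus ?thesis by simp
qed

lemma num_PF: "(numeral k :: 'a) \<in> PF" using PF_of_nat[of "numeral k"] by simp
lemma two_LL: "(2::'a) \<in> LL" using num_PF PF_LL by blast
lemma four_LL: "(4::'a) \<in> LL" using num_PF PF_LL by blast

lemma MM_pow_add: "(a + b :: 'a) ^ MM = a ^ MM + b ^ MM" unfolding MM_def by (rule frob_add)
lemma MM_pow_diff: "(a - b :: 'a) ^ MM = a ^ MM - b ^ MM" unfolding MM_def by (rule frob_diff)
lemma LL_fix: "a \<in> LL \<Longrightarrow> a ^ MM = a" unfolding LL_def by simp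
lemma pow_MP: "(x::'a) ^ MP = x * x ^ MM" unfolding MP_def by simp

lemma chiL2_sq: assumes "s \<in> LL" "s \<noteq> 0" shows "chiL 2 (s * s) = 1"
proof -
  have "chiL 2 (s * s) = chiL 2 s * chiL 2 s" by (rule chiL_mult[OF assms(1) assms(1)])
  also have "\<dots> = chiL 4 s" by (simp add: chiL_add_idx)
  also have "\<dots> = 1" by (rule chiL_triv[OF assms(2)]) simp
  finally show ?thesis .
qed

lemma chiL2_vals: assumes "d \<noteq> 0" shows "chiL 2 d = 1 \<or> chiL 2 d = -1"
proof -
  have "chiL 2 d = \<i> ^ (indL d * 2)" unfolding chiL_def using assms by (simp add: mult.commute)
  also have "\<dots> = (- 1) ^ indL d" by (rule i_even_power)
  finally show ?thesis by (cases "even (indL d)") auto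
qed

lemma sqL: assumes "d \<in> LL" "d \<noteq> 0" "chiL 2 d = 1" shows "\<exists>s\<in>LL. s * s = d"
proof -
  have "\<i> ^ (2 * indL d) = 1" using assms unfolding chiL_def by simp
  hence "(2 * indL d) mod 4 = 0" using i_pow_neq1 by blast
  hence "even (indL d)" by presburger
  then obtain k where k: "indL d = 2 * k" by blast
  define s where "s = g ^ (MP * k)"
  have "s \<noteq> 0" unfolding s_def by simp
  moreover have "ind s = MP * (k mod MN)" unfolding s_def ind_gpow by (rule MMmod)
  ultimately have "s \<in> LL" using LL_iff_ind' by simp
  moreover have "s * s = d"
  proof -
    have "s * s = g ^ (MP * k + MP * k)" unfolding s_def by (simp add: power_add)
    also have "MP * k + MP * k = ind d" using indL_props(1)[OF assms(1,2)] k by simp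
    finally show ?thesis using ind_props(2)[OF assms(2)] by simp
  qed
  ultimately show ?thesis by blast
qed

lemma sqK: assumes "d \<in> LL" shows "\<exists>s. s * s = d"
proof (cases "d = 0")
  case True thus ?thesis by (intro exI[of _ 0]) simp
next
  case False
  have "even MP" unfolding MP_def using MM_odd by simp
  then obtain c where c: "MP = 2 * c" by blast
  have "ind d = 2 * (c * indL d)" using indL_props(1)[OF assms False] c by simp
  hence "g ^ (c * indL d) * g ^ (c * indL d) = d" using ind_props(2)[OF False]
    by (metis mult_2 power_add)
  thus ?thesis by blast
qed

lemma count_DH: assumes t: "t \<in> LL" and n: "n \<in> LL" "n \<noteq> 0"
  shows "of_nat (card {x::'a. x ^ MP = n \<and> x + x ^ MM = t}) = 1 - chiL 2 (t * t - 4 * n)"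
proof -
  define X where "X = {x::'a. x ^ MP = n \<and> x + x ^ MM = t}"
  define D where "D = t * t - 4 * n"
  have DLL: "D \<in> LL" unfolding D_def using t n four_LL LL_mult LL_diff by blast
  have key: "(2 * x - t) * (2 * x - t) = D" if "x \<in> X" for x
  proof -
    have "x ^ MM = t - x" "x * x ^ MM = n" using that pow_MP unfolding X_def by (auto simp: algebra_simps)
    hence nx: "n = x * (t - x)" by simp
    show ?thesis unfolding D_def nx by (simp add: algebra_simps)
  qed
  have two2: "(2::'a) ^ MM = 2" using LL_fix[OF two_LL] .
  have half_MM: "(a / 2) ^ MM = a ^ MM / 2" for a :: 'a by (simp add: power_divide two2)
  show ?thesis
  proof (cases "D = 0")
    case True
    have "X = {t / 2}"
    proof (intro equalityI subsetI)
      fix x assume "x \<in> X"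
      hence "(2 * x - t) * (2 * x - t) = 0" using key True by simp
      hence "2 * x = t" by simp
      thus "x \<in> {t / 2}" using two_nz by (auto simp: field_simps)
    next
      fix x assume "x \<in> {t / 2}"
      hence x: "x = t / 2" by simp
      have xm: "x ^ MM = t / 2" unfolding x by (simp only: half_MM LL_fix[OF t])
      have "x + x ^ MM = t / 2 + t / 2" by (subst xm) (simp add: x)
      also have "\<dots> = (t + t) / 2" by (rule add_divide_distrib[symmetric])
      also have "t + t = 2 * t" by simp
      also have "2 * t / 2 = t" using two_nz by simp
      finally have "x + x ^ MM = t" .
      moreover have "x ^ MP = n"
      proof -
        have "x ^ MP = x * x ^ MM" by (rule pow_MP)
        also have "\<dots> = (t / 2) * (t / 2)" by (subst xm) (simp add: x)
        finally have "x ^ MP = (t / 2) * (t / 2)" .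
        also have "\<dots> = t * t / 4" by (simp add: field_simps)
        also have "t * t = 4 * n" using True unfolding D_def by simp
        finally show ?thesis using four_nz by simp
      qed
      ultimately show "x \<in> X" unfolding X_def by simp
    qed
    thus ?thesis using True unfolding X_def D_def by simp
  next
    case Dnz: False
    show ?thesis
    proof (cases "chiL 2 D = 1")
      case True
      obtain s where s: "s \<in> LL" "s * s = D" using sqL[OF DLL Dnz True] by blast
      have "X = {}"
      proof (rule ccontr)
        assume "X \<noteq> {}"
        then obtain x where x: "x \<in> X" by blast
        have "(2 * x - t) * (2 * x - t) = s * s" using key[OF x] s by simp
        hence "2 * x - t = s \<or> 2 * x - t = - s" by (simp only: square_eq_iff)
        hence "2 * x \<in> LL" using s t LL_add LL_diff LL_neg
          by (metis add_diff_cancel_right' diff_add_cancel diff_minus_eq_add)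
        hence "x \<in> LL" using two_LL two_nz LL_mult LL_inv
          by (metis nonzero_mult_div_cancel_left divide_inverse mult.commute)
        hence "x + x = t" using x LL_fix unfolding X_def by auto
        hence "2 * x - t = 0" by (simp add: algebra_simps)
        hence "D = 0" using key[OF x] by simp
        thus False using Dnz by simp
      qed
      thus ?thesis using True unfolding X_def D_def by simp
    next
      case False
      hence chim: "chiL 2 D = -1" using chiL2_vals[OF Dnz] by simp
      obtain s where s: "s * s = D" using sqK[OF DLL] by blast
      have snz: "s \<noteq> 0" using s Dnz by auto
      have sL: "s \<notin> LL"
      proof
        assume "s \<in> LL"
        hence "chiL 2 (s * s) = 1" using snz by (rule chiL2_sq)
        hence "chiL 2 D = 1" unfolding s .
        with False show False by simp
      qed
      have "s ^ MM * s ^ MM = s * s"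
      proof -
        have "s ^ MM * s ^ MM = (s * s) ^ MM" by (simp add: power_mult_distrib)
        thus ?thesis using s LL_fix[OF DLL] by simp
      qed
      hence "s ^ MM = s \<or> s ^ MM = - s" by (simp only: square_eq_iff)
      moreover have "s ^ MM \<noteq> s" using sL unfolding LL_def by simp
      ultimately have sm: "s ^ MM = - s" by simp
      define x1 where "x1 = (t + s) / 2"
      define x2 where "x2 = (t - s) / 2"
      have x1m: "x1 ^ MM = x2" unfolding x1_def x2_def half_MM MM_pow_add sm LL_fix[OF t] by simp
      have x2m: "x2 ^ MM = x1" unfolding x1_def x2_def half_MM MM_pow_diff sm LL_fix[OF t] by simp
      have prod: "x1 * x2 = n"
      proof -
        have "x1 * x2 = (t * t - s * s) / 4" unfolding x1_def x2_def by (simp add: field_simps)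
        also have "\<dots> = n" using s four_nz unfolding D_def by (simp add: field_simps)
        finally show ?thesis .
      qed
      have sum12: "x1 + x2 = t" unfolding x1_def x2_def using two_nz four_nz by (simp add: field_simps)
      have neq: "x1 \<noteq> x2"
      proof
        assume "x1 = x2"
        hence "s + s = 0" unfolding x1_def x2_def using two_nz four_nz by (simp add: field_simps)
        hence "2 * s = 0" by simp
        thus False using snz two_nz by simp
      qed
      have "X = {x1, x2}"
      proof (intro equalityI subsetI)
        fix x assume x: "x \<in> X"
        have "(2 * x - t) * (2 * x - t) = s * s" using key[OF x] s by simp
        hence "2 * x - t = s \<or> 2 * x - t = - s" by (simp only: square_eq_iff)
        thus "x \<in> {x1, x2}" unfolding x1_def x2_def using two_nz by (auto simp: field_simps)
      next
        fix x assume "x \<in> {x1, x2}"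
        thus "x \<in> X" unfolding X_def using x1m x2m prod sum12 pow_MP by (auto simp: ac_simps)
      qed
      hence "card X = 2" using neq by simp
      thus ?thesis using chim unfolding X_def D_def by simp
    qed
  qed
qed

end

lemma sum4: "(\<Sum>j<(4::nat). f j) = f 0 + f 1 + f 2 + (f 3 :: complex)"
  by (simp add: eval_nat_numeral)

lemma i_pow_table: "\<i> ^ k = (if k mod 4 = 0 then 1 else if k mod 4 = 1 then \<i> else if k mod 4 = 2 then -1 else - \<i>)"
proof -
  have "\<i> ^ k = \<i> ^ (k mod 4)" by (rule i_pow_mod)
  moreover have "k mod 4 = 0 \<or> k mod 4 = 1 \<or> k mod 4 = 2 \<or> k mod 4 = 3" by linarith
  moreover have "\<i> ^ 3 = - \<i>" by (simp add: power3_eq_cube)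
  ultimately show ?thesis by auto
qed

context pgraph begin

definition GK :: "nat \<Rightarrow> complex" where "GK j = (\<Sum>x\<in>UNIV. chiK j x * psiK x)"

lemma GK_DH: "GK j = - (\<Sum>t\<in>LL. psiL t * (\<Sum>n\<in>LL - {0}. chiL j n * chiL 2 (t * t - 4 * n)))"
proof -
  define S where "S = (UNIV :: 'a set) - {0}"
  define T where "T = (LL - {0}) \<times> LL"
  define phi where "phi x = (x ^ MP, x + x ^ MM)" for x :: 'a
  define Fp where "Fp z = chiL j (fst z) * psiL (snd z)" for z :: "'a \<times> 'a"
  define cc where "cc n t = chiL 2 (t * t - 4 * n)" for n t :: 'a
  have "GK j = chiK j 0 * psiK 0 + (\<Sum>x\<in>S. chiK j x * psiK x)"
    unfolding GK_def S_def using sum.remove[of "UNIV::'a set" 0 "\<lambda>x. chiK j x * psiK x"] by simp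
  also have "\<dots> = (\<Sum>x\<in>S. Fp (phi x))"
  proof -
    have "(\<Sum>x\<in>S. chiK j x * psiK x) = (\<Sum>x\<in>S. Fp (phi x))"
    proof (rule sum.cong[OF refl])
      fix x assume "x \<in> S"
      hence "x \<noteq> 0" unfolding S_def by simp
      thus "chiK j x * psiK x = Fp (phi x)" unfolding Fp_def phi_def
        using norm_LL(3)[of x j] psiK_TL[of x] by simp
    qed
    thus ?thesis by simp
  qed
  also have "\<dots> = (\<Sum>z\<in>T. \<Sum>x\<in>{x \<in> S. phi x = z}. Fp (phi x))"
  proof (rule sum.group[symmetric])
    show "finite S" by simp
    show "finite T" unfolding T_def by simp
    show "phi ` S \<subseteq> T"
    proof
      fix z assume "z \<in> phi ` S"
      then obtain x where x: "x \<in> S" "z = phi x" by blast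
      hence "x \<noteq> 0" unfolding S_def by simp
      thus "z \<in> T" unfolding x(2) T_def phi_def using norm_LL[of x] LL_tr[of x] by simp
    qed
  qed
  also have "\<dots> = (\<Sum>z\<in>T. (1 - cc (fst z) (snd z)) * Fp z)"
  proof (rule sum.cong[OF refl])
    fix z assume z: "z \<in> T"
    have set_eq: "{x \<in> S. phi x = z} = {x. x ^ MP = fst z \<and> x + x ^ MM = snd z}"
      unfolding S_def phi_def using z unfolding T_def by (cases z) auto
    have "(\<Sum>x\<in>{x \<in> S. phi x = z}. Fp (phi x)) = (\<Sum>x\<in>{x \<in> S. phi x = z}. Fp z)"
      by (rule sum.cong) auto
    also have "\<dots> = of_nat (card {x \<in> S. phi x = z}) * Fp z" by simp
    also have "of_nat (card {x \<in> S. phi x = z}) = 1 - cc (fst z) (snd z)"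
      unfolding set_eq cc_def using z unfolding T_def by (intro count_DH) auto
    finally show "(\<Sum>x\<in>{x \<in> S. phi x = z}. Fp (phi x)) = (1 - cc (fst z) (snd z)) * Fp z" .
  qed
  also have "\<dots> = (\<Sum>n\<in>LL - {0}. \<Sum>t\<in>LL. (1 - cc n t) * (chiL j n * psiL t))"
    unfolding T_def Fp_def by (simp add: sum.cartesian_product')
  also have "\<dots> = (\<Sum>n\<in>LL - {0}. chiL j n * (\<Sum>t\<in>LL. psiL t)) -
                   (\<Sum>n\<in>LL - {0}. \<Sum>t\<in>LL. cc n t * chiL j n * psiL t)"
    by (simp add: sum_subtractf[symmetric] sum_distrib_left algebra_simps)
  also have "(\<Sum>n\<in>LL - {0}. chiL j n * (\<Sum>t\<in>LL. psiL t)) = 0" using sumL_psi by simp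
  also have "(\<Sum>n\<in>LL - {0}. \<Sum>t\<in>LL. cc n t * chiL j n * psiL t) =
             (\<Sum>t\<in>LL. psiL t * (\<Sum>n\<in>LL - {0}. chiL j n * cc n t))"
    by (subst sum.swap) (simp add: sum_distrib_left ac_simps)
  finally show ?thesis unfolding cc_def by simp
qed

lemma inv4_PF: "inverse (4::'a) \<in> PF" using PF_inv num_PF by blast

lemma GK_odd: assumes "odd j" shows "GK j = - JL j 2 * GL 2"
proof -
  have jm: "(j + 2) mod 4 \<noteq> 0" using assms by presburger
  have jj: "(j + j) mod 4 = 2 mod 4" using assms by presburger
  have inner: "(\<Sum>n\<in>LL - {0}. chiL j n * chiL 2 (t * t - 4 * n)) = chiL 2 t * JL j 2"
    if t: "t \<in> LL" for t
  proof (cases "t = 0")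
    case True
    have "(\<Sum>n\<in>LL - {0}. chiL j n * chiL 2 (t * t - 4 * n)) = (\<Sum>n\<in>LL - {0}. chiL (j + 2) n)"
    proof (rule sum.cong[OF refl])
      fix n assume n: "n \<in> LL - {0}"
      have "chiL 2 (t * t - 4 * n) = chiL 2 (4 * n)" unfolding True using n four_LL LL_mult
        by (simp add: chiL_neg)
      also have "\<dots> = chiL 2 4 * chiL 2 n" using n four_LL by (simp add: chiL_mult)
      also have "chiL 2 (4::'a) = 1" using chiL_PF[OF num_PF four_nz] .
      finally show "chiL j n * chiL 2 (t * t - 4 * n) = chiL (j + 2) n" by (simp add: chiL_add_idx)
    qed
    also have "\<dots> = (\<Sum>n\<in>LL. chiL (j + 2) n)" using LL_0 by (simp add: sum.remove)
    also have "\<dots> = 0" using chiL_sum[OF jm] .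
    finally show ?thesis using True by simp
  next
    case False
    define c where "c = t * t * inverse 4"
    have cL: "c \<in> LL" unfolding c_def using t four_LL LL_mult LL_inv by blast
    have cnz: "c \<noteq> 0" unfolding c_def using False four_nz by simp
    have c4: "4 * c = t * t" unfolding c_def using four_nz by simp
    have chic: "chiL j c = chiL 2 t"
    proof -
      have "chiL j c = chiL j (t * t) * chiL j (inverse 4)" unfolding c_def
        using t four_LL LL_mult LL_inv chiL_mult by metis
      also have "chiL j (inverse (4::'a)) = 1" using chiL_PF[OF inv4_PF] four_nz by simp
      also have "chiL j (t * t) = chiL (j + j) t" using chiL_mult[OF t t] chiL_add_idx by simp
      also have "\<dots> = chiL 2 t" using chiL_cong[OF jj] by simp
      finally show ?thesis by simp
    qed
    have tt: "chiL 2 (t * t) = 1" using chiL2_sq[OF t False] .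
    have "(\<Sum>m\<in>LL - {0}. chiL j (c * m) * chiL 2 (t * t - 4 * (c * m))) =
          (\<Sum>n\<in>LL - {0}. chiL j n * chiL 2 (t * t - 4 * n))"
    proof (rule sum.reindex_bij_witness[of _ "\<lambda>n. n / c" "\<lambda>m. c * m"])
      fix m assume "m \<in> LL - {0}" thus "c * m / c = m" "c * m \<in> LL - {0}" using cL cnz LL_mult by auto
    next
      fix n assume "n \<in> LL - {0}" thus "c * (n / c) = n" "n / c \<in> LL - {0}"
        using cL cnz LL_mult LL_inv by (auto simp: divide_inverse)
    qed simp
    also have "(\<Sum>m\<in>LL - {0}. chiL j (c * m) * chiL 2 (t * t - 4 * (c * m))) =
               (\<Sum>m\<in>LL - {0}. chiL 2 t * (chiL j m * chiL 2 (1 - m)))"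
    proof (rule sum.cong[OF refl])
      fix m assume m: "m \<in> LL - {0}"
      have m1: "1 - m \<in> LL" using m LL_diff LL_1 by blast
      have "t * t - 4 * (c * m) = (t * t) * (1 - m)" using c4 by (simp add: algebra_simps)
      hence "chiL 2 (t * t - 4 * (c * m)) = chiL 2 (1 - m)"
        using chiL_mult[OF LL_mult[OF t t] m1] tt by simp
      moreover have "chiL j (c * m) = chiL 2 t * chiL j m" using chiL_mult[OF cL, of m j] m chic by simp
      ultimately show "chiL j (c * m) * chiL 2 (t * t - 4 * (c * m)) = chiL 2 t * (chiL j m * chiL 2 (1 - m))"
        by simp
    qed
    also have "\<dots> = chiL 2 t * (\<Sum>m\<in>LL - {0}. chiL j m * chiL 2 (1 - m))" by (simp add: sum_distrib_left)
    also have "(\<Sum>m\<in>LL - {0}. chiL j m * chiL 2 (1 - m)) = JL j 2"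
      unfolding JL_def using LL_0 by (simp add: sum.remove)
    finally show ?thesis by simp
  qed
  have e: "(\<Sum>t\<in>LL. psiL t * (\<Sum>n\<in>LL - {0}. chiL j n * chiL 2 (t * t - 4 * n))) =
      (\<Sum>t\<in>LL. psiL t * (chiL 2 t * JL j 2))" by (rule sum.cong[OF refl]) (simp add: inner)
  have "GK j = - (\<Sum>t\<in>LL. psiL t * (chiL 2 t * JL j 2))" by (simp only: GK_DH e)
  moreover have "(\<Sum>t\<in>LL. psiL t * (chiL 2 t * JL j 2)) = JL j 2 * GL 2"
    unfolding GL_def by (simp add: sum_distrib_left ac_simps)
  ultimately show ?thesis by simp
qed

lemma GK1: "GK 1 = - of_nat MM"
  using GK_odd[of 1] JL12 GL2_sq by simp

lemma GK3: "GK 3 = - of_nat MM"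
  using GK_odd[of 3] JL32 GL2_sq by simp

lemma GK0: "GK 0 = -1"
proof -
  have "GK 0 = chiK 0 0 * psiK 0 + (\<Sum>x\<in>UNIV - {0}. chiK 0 x * psiK x)"
    unfolding GK_def using sum.remove[of "UNIV::'a set" 0 "\<lambda>x. chiK 0 x * psiK x"] by simp
  also have "(\<Sum>x\<in>UNIV - {0}. chiK 0 x * psiK x) = (\<Sum>x\<in>UNIV - {0}. psiK x)"
    by (rule sum.cong) (auto simp: chiK_def)
  also have "\<dots> = (\<Sum>x\<in>UNIV. psiK x) - psiK 0" by (simp add: sum_diff1)
  finally show ?thesis using sumK_psi psiK_0 by simp
qed

end

lemma c4_cases: "(c::nat) < 4 \<Longrightarrow> c = 0 \<or> c = 1 \<or> c = 2 \<or> c = 3" by linarith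

lemma indic_calc: "(c::nat) < 4 \<Longrightarrow>
   (1/4) * (\<Sum>j<4. (1 + \<i> ^ (3 * j)) * \<i> ^ (j * c)) = (if c = 0 \<or> c = 1 then 1 else (0::complex))"
  apply (simp add: sum4 i_pow_table)
  apply (drule c4_cases)
  apply (elim disjE)
  apply (simp_all add: field_simps)
  done

lemma lam_calc: "(c::nat) < 4 \<Longrightarrow> (1/4) * ((1 + 1) * 1 * (-1) + (1 + \<i>^3) * \<i>^(3*c) * (- M) + (1 + \<i>^6) * \<i>^(6*c) * G + (1 + \<i>^9) * \<i>^(9*c) * (-M))
   = (if c = 1 \<or> c = 2 then (M - 1)/2 else - (M + 1) / (2::complex))"
  apply (drule c4_cases)
  apply (elim disjE)
  apply (simp_all add: i_pow_table field_simps)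
  done

context pgraph begin

definition Sc :: "'a set" where "Sc = {s. s \<noteq> 0 \<and> (ind s mod 4 = 0 \<or> ind s mod 4 = 1)}"
definition Bc :: "'a set" where "Bc = {s. s \<noteq> 0 \<and> (ind s mod 4 = 0 \<or> ind s mod 4 = 3)}"
definition Lam :: "'a \<Rightarrow> complex" where "Lam y = (\<Sum>s\<in>Sc. psiK (y * s))"

lemma chiK_red: "x \<noteq> 0 \<Longrightarrow> chiK j x = \<i> ^ (j * (ind x mod 4))"
  unfolding chiK_def by (auto intro: i_pow_cong simp: mod_mult_right_eq)

lemma indic: assumes "s \<noteq> 0"
  shows "(if s \<in> Sc then 1 else 0) = (1/4) * (\<Sum>j<4. (1 + \<i> ^ (3 * j)) * chiK j s)"
proof -
  have "(1/4) * (\<Sum>j<4. (1 + \<i> ^ (3 * j)) * chiK j s) =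
        (1/4) * (\<Sum>j<4. (1 + \<i> ^ (3 * j)) * \<i> ^ (j * (ind s mod 4)))"
    using chiK_red[OF assms] by simp
  also have "\<dots> = (if ind s mod 4 = 0 \<or> ind s mod 4 = 1 then 1 else 0)"
    by (rule indic_calc) simp
  finally show ?thesis unfolding Sc_def using assms by simp
qed

lemma twist: assumes "y \<noteq> 0" shows "(\<Sum>s\<in>UNIV. chiK j s * psiK (y * s)) = chiK (3 * j) y * GK j"
proof -
  have "(\<Sum>s\<in>UNIV. chiK j (y * s) * psiK (y * s)) = GK j" unfolding GK_def
    by (rule sum.reindex_bij_witness[of _ "\<lambda>x. x / y" "\<lambda>s. y * s"]) (use assms in auto)
  hence "GK j = chiK j y * (\<Sum>s\<in>UNIV. chiK j s * psiK (y * s))"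
    by (simp add: chiK_mult sum_distrib_left ac_simps)
  hence "chiK (3 * j) y * GK j = (chiK (3 * j) y * chiK j y) * (\<Sum>s\<in>UNIV. chiK j s * psiK (y * s))"
    by (simp add: ac_simps)
  also have "chiK (3 * j) y * chiK j y = 1" using chiK_add_idx chiK_triv[OF assms, of "3 * j + j"] by simp
  finally show ?thesis by simp
qed

lemma Lam_formula: assumes "y \<noteq> 0"
  shows "Lam y = (1/4) * (\<Sum>j<4. (1 + \<i> ^ (3 * j)) * (chiK (3 * j) y * GK j))"
proof -
  have "Lam y = (\<Sum>s\<in>UNIV - {0}. (if s \<in> Sc then 1 else 0) * psiK (y * s))"
  proof -
    have "Sc \<subseteq> UNIV - {0}" unfolding Sc_def by auto
    hence "(\<Sum>s\<in>UNIV - {0}. (if s \<in> Sc then 1 else 0) * psiK (y * s)) = (\<Sum>s\<in>Sc. psiK (y * s))"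
      by (intro sum.mono_neutral_cong_right) auto
    thus ?thesis unfolding Lam_def by simp
  qed
  also have "\<dots> = (\<Sum>s\<in>UNIV - {0}. (1/4) * (\<Sum>j<4. (1 + \<i> ^ (3 * j)) * (chiK j s * psiK (y * s))))"
    by (rule sum.cong[OF refl]) (simp add: indic sum_distrib_right sum_distrib_left ac_simps)
  also have "\<dots> = (1/4) * (\<Sum>j<4. (1 + \<i> ^ (3 * j)) * (\<Sum>s\<in>UNIV - {0}. chiK j s * psiK (y * s)))"
  proof -
    have "(\<Sum>s\<in>UNIV - {0}. (1/4) * (\<Sum>j<4. (1 + \<i> ^ (3 * j)) * (chiK j s * psiK (y * s)))) =
          (1/4) * (\<Sum>s\<in>UNIV - {0}. \<Sum>j<4. (1 + \<i> ^ (3 * j)) * (chiK j s * psiK (y * s)))"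
      by (rule sum_distrib_left[symmetric])
    also have "(\<Sum>s\<in>UNIV - {0}. \<Sum>j<4. (1 + \<i> ^ (3 * j)) * (chiK j s * psiK (y * s))) =
               (\<Sum>j<4. \<Sum>s\<in>UNIV - {0}. (1 + \<i> ^ (3 * j)) * (chiK j s * psiK (y * s)))"
      by (rule sum.swap)
    also have "\<dots> = (\<Sum>j<4. (1 + \<i> ^ (3 * j)) * (\<Sum>s\<in>UNIV - {0}. chiK j s * psiK (y * s)))"
      by (simp add: sum_distrib_left)
    finally show ?thesis .
  qed
  also have "\<dots> = (1/4) * (\<Sum>j<4. (1 + \<i> ^ (3 * j)) * (chiK (3 * j) y * GK j))"
  proof -
    have "(\<Sum>s\<in>UNIV - {0}. chiK j s * psiK (y * s)) = chiK (3 * j) y * GK j" for j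
    proof -
      have "(\<Sum>s\<in>UNIV. chiK j s * psiK (y * s)) = chiK j 0 * psiK (y * 0) + (\<Sum>s\<in>UNIV - {0}. chiK j s * psiK (y * s))"
        using sum.remove[of "UNIV::'a set" 0 "\<lambda>s. chiK j s * psiK (y * s)"] by simp
      thus ?thesis using twist[OF assms, of j] by simp
    qed
    thus ?thesis by simp
  qed
  finally show ?thesis .
qed

lemma Lam_val: assumes "y \<noteq> 0"
  shows "Lam y = (if ind y mod 4 = 1 \<or> ind y mod 4 = 2 then (of_nat MM - 1) / 2 else - (of_nat MM + 1) / 2)"
proof -
  define c where "c = ind y mod 4"
  have c4: "c < 4" unfolding c_def by simp
  have ch: "chiK k y = \<i> ^ (k * c)" for k using chiK_red[OF assms, of k] unfolding c_def
    by (auto intro: i_pow_cong simp: mod_mult_right_eq)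
  have "Lam y = (1/4) * ((1 + 1) * 1 * (-1) + (1 + \<i>^3) * \<i>^(3*c) * (- of_nat MM) + (1 + \<i>^6) * \<i>^(6*c) * GK 2
          + (1 + \<i>^9) * \<i>^(9*c) * (- of_nat MM))"
    unfolding Lam_formula[OF assms] sum4 using ch GK0 GK1 GK3 by simp
  also have "\<dots> = (if c = 1 \<or> c = 2 then (of_nat MM - 1)/2 else - (of_nat MM + 1) / 2)"
    by (rule lam_calc[OF c4])
  finally show ?thesis unfolding c_def .
qed

lemma card_Sc: "card Sc = nn div 2"
proof -
  obtain m where m: "nn = 4 * m" using four_dvd_nn by blast
  define A0 where "A0 = (\<lambda>i. 4 * i) ` {..<m}"
  define A1 where "A1 = (\<lambda>i. 4 * i + 1) ` {..<m}"
  have Sc_eq: "Sc = (\<lambda>k. g ^ k) ` (A0 \<union> A1)"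
  proof (intro equalityI subsetI)
    fix s assume s: "s \<in> Sc"
    hence snz: "s \<noteq> 0" unfolding Sc_def by simp
    have lt: "ind s < 4 * m" using ind_props(1)[OF snz] m by simp
    have "ind s \<in> A0 \<union> A1"
    proof (cases "ind s mod 4 = 0")
      case True
      hence "ind s = 4 * (ind s div 4)" using div_mult_mod_eq[of "ind s" 4] by simp
      moreover have "ind s div 4 < m" using lt by simp
      ultimately show ?thesis unfolding A0_def by blast
    next
      case False
      hence "ind s mod 4 = 1" using s unfolding Sc_def by simp
      hence "ind s = 4 * (ind s div 4) + 1" using div_mult_mod_eq[of "ind s" 4] by simp
      moreover have "ind s div 4 < m" using lt by simp
      ultimately show ?thesis unfolding A1_def by blast
    qed
    thus "s \<in> (\<lambda>k. g ^ k) ` (A0 \<union> A1)" using ind_props(2)[OF snz] by force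
  next
    fix s assume "s \<in> (\<lambda>k. g ^ k) ` (A0 \<union> A1)"
    then obtain k where k: "k \<in> A0 \<union> A1" "s = g ^ k" by blast
    have "k < nn \<and> (k mod 4 = 0 \<or> k mod 4 = 1)" using k(1) m unfolding A0_def A1_def by auto
    moreover have "ind s = k mod nn" using k(2) ind_gpow by simp
    ultimately show "s \<in> Sc" unfolding Sc_def using k(2) by simp
  qed
  have sub: "A0 \<union> A1 \<subseteq> {..<nn}" unfolding A0_def A1_def using m by auto
  have "card Sc = card (A0 \<union> A1)" unfolding Sc_eq
    by (rule card_image) (rule inj_on_subset[OF _ sub], use g_order in simp)
  also have "\<dots> = card A0 + card A1"
    by (rule card_Un_disjoint) (auto simp: A0_def A1_def, presburger)
  also have "card A0 = m" unfolding A0_def by (subst card_image) (auto simp: inj_on_def)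
  also have "card A1 = m" unfolding A1_def by (subst card_image) (auto simp: inj_on_def)
  finally show ?thesis using m by simp
qed

lemma Lam0: "Lam 0 = of_nat (nn div 2)" unfolding Lam_def using card_Sc psiK_0 by simp

lemma adj_iff: "peisert_adj g x y \<longleftrightarrow> x - y \<in> Sc"
proof
  assume "peisert_adj g x y"
  hence xy: "x \<noteq> y" and "\<exists>j::nat. (j mod 4 = 0 \<or> j mod 4 = 1) \<and> x - y = g ^ j"
    unfolding peisert_adj_def by auto
  then obtain j :: nat where jj: "(j mod 4 = 0 \<or> j mod 4 = 1) \<and> x - y = g ^ j" by (elim exE) (rule that)
  hence j: "j mod 4 = 0 \<or> j mod 4 = 1" "x - y = g ^ j" by auto
  have "ind (x - y) = j mod nn" using j(2) ind_gpow by simp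
  hence "ind (x - y) mod 4 = j mod 4" using four_dvd_nn by (simp add: mod_mod_cancel)
  thus "x - y \<in> Sc" unfolding Sc_def using j xy by simp
next
  assume "x - y \<in> Sc"
  hence "x - y \<noteq> 0" "ind (x - y) mod 4 = 0 \<or> ind (x - y) mod 4 = 1" unfolding Sc_def by auto
  hence "x \<noteq> y \<and> (ind (x - y) mod 4 = 0 \<or> ind (x - y) mod 4 = 1) \<and> x - y = g ^ ind (x - y)"
    using ind_props(2)[of "x - y"] by auto
  thus "peisert_adj g x y" unfolding peisert_adj_def
    by (intro conjI exI[of _ "ind (x - y)"]) auto
qed

lemma neg1_g: "(- 1 :: 'a) = g ^ (nn div 2)"
proof -
  define z where "z = g ^ (nn div 2)"
  have "z * z = g ^ (nn div 2 + nn div 2)" unfolding z_def by (simp add: power_add)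
  also have "nn div 2 + nn div 2 = nn" using four_dvd_nn by auto
  finally have "z * z = 1 * 1" using g_nn by simp
  hence "z = 1 \<or> z = - 1" by (simp only: square_eq_iff)
  moreover have "z \<noteq> 1"
  proof
    assume "z = 1"
    hence "nn dvd nn div 2" unfolding z_def using gpow_eq_1_iff by simp
    moreover have "0 < nn div 2" "nn div 2 < nn" using nn_pos four_dvd_nn by auto
    ultimately show False by (simp add: nat_dvd_not_less)
  qed
  ultimately show ?thesis unfolding z_def by simp
qed

lemma ind_neg_mod4: assumes "y \<noteq> 0" shows "ind (- y) mod 4 = ind y mod 4"
proof -
  have "ind (- 1 :: 'a) = nn div 2" using neg1_g ind_gpow nn_pos by simp
  moreover have "4 dvd nn div 2" using eight_dvd_nn by auto
  ultimately have "ind (- 1 :: 'a) mod 4 = 0" by simp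
  have "ind (- y) = (ind (- 1 :: 'a) + ind y) mod nn" using ind_mult[of "-1" y] assms by simp
  hence "ind (- y) mod 4 = (ind (- 1 :: 'a) + ind y) mod 4" using four_dvd_nn by (simp add: mod_mod_cancel)
  thus ?thesis using \<open>ind (- 1 :: 'a) mod 4 = 0\<close> by (simp add: mod_add_left_eq[symmetric])
qed

end

context pgraph begin

definition addsub :: "'a set \<Rightarrow> bool" where
  "addsub W \<longleftrightarrow> 0 \<in> W \<and> (\<forall>x\<in>W. \<forall>y\<in>W. x + y \<in> W) \<and> (\<forall>x\<in>W. - x \<in> W)"
definition Wp :: "'a set \<Rightarrow> 'a set" where "Wp W = {y. \<forall>x\<in>W. psiK (x * y) = 1}"

lemma addsub_diff: "addsub W \<Longrightarrow> x \<in> W \<Longrightarrow> y \<in> W \<Longrightarrow> x - y \<in> W"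
  unfolding addsub_def by (metis diff_conv_add_uminus)

lemma sub_sum: assumes "addsub W"
  shows "(\<Sum>x\<in>W. psiK (x * y)) = (if y \<in> Wp W then of_nat (card W) else 0)"
proof (cases "y \<in> Wp W")
  case True
  hence "(\<Sum>x\<in>W. psiK (x * y)) = (\<Sum>x\<in>W. 1)" unfolding Wp_def by (intro sum.cong) auto
  thus ?thesis using True by simp
next
  case False
  then obtain x0 where x0: "x0 \<in> W" "psiK (x0 * y) \<noteq> 1" unfolding Wp_def by auto
  have "(\<Sum>x\<in>W. psiK (x * y)) = (\<Sum>x\<in>W. psiK ((x + x0) * y))"
  proof (rule sum.reindex_bij_witness[of _ "\<lambda>x. x + x0" "\<lambda>x. x - x0"])
    fix a assume "a \<in> W"
    thus "a - x0 + x0 = a" "a - x0 \<in> W" using addsub_diff[OF assms _ x0(1)] by auto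
  next
    fix b assume "b \<in> W"
    thus "b + x0 - x0 = b" "b + x0 \<in> W" using assms x0(1) unfolding addsub_def by auto
  qed simp
  also have "\<dots> = (\<Sum>x\<in>W. psiK (x0 * y) * psiK (x * y))"
  proof (rule sum.cong[OF refl])
    fix x
    have "(x + x0) * y = x * y + x0 * y" by (rule distrib_right)
    thus "psiK ((x + x0) * y) = psiK (x0 * y) * psiK (x * y)" by (simp only: psiK_add mult.commute)
  qed
  also have "\<dots> = psiK (x0 * y) * (\<Sum>x\<in>W. psiK (x * y))" by (rule sum_distrib_left[symmetric])
  finally have "(1 - psiK (x0 * y)) * (\<Sum>x\<in>W. psiK (x * y)) = 0" by (simp add: algebra_simps)
  thus ?thesis using x0(2) False by simp
qed

lemma sub_sum_neg: assumes "addsub W" shows "(\<Sum>x\<in>W. psiK (- (x * y))) = (\<Sum>x\<in>W. psiK (x * y))"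
  by (rule sum.reindex_bij_witness[of _ "\<lambda>x. - x" "\<lambda>x. - x"]) (use assms in \<open>auto simp: addsub_def\<close>)

lemma psiK_prod_split: "psiK (y * (x - x')) = psiK (x * y) * psiK (- (x' * y))"
proof -
  have e: "y * (x - x') = x * y + - (x' * y)" by (simp add: algebra_simps)
  show ?thesis unfolding e by (rule psiK_add)
qed

lemma parseval: assumes "addsub W" shows "card W * card (Wp W) = qq"
proof -
  define Qs where "Qs = (\<Sum>y\<in>UNIV. \<Sum>x\<in>W. \<Sum>x'\<in>W. psiK (y * (x - x')))"
  have finW: "finite W" by simp
  have "Qs = (\<Sum>x\<in>W. \<Sum>x'\<in>W. \<Sum>y\<in>UNIV. psiK (y * (x - x')))"
    unfolding Qs_def by (subst sum.swap) (subst (2) sum.swap, rule refl)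
  also have "\<dots> = (\<Sum>x\<in>W. \<Sum>x'\<in>W. if x' = x then of_nat qq else 0)"
    by (intro sum.cong refl) (auto simp: sumK_psi_mult)
  also have "\<dots> = (\<Sum>x\<in>W. of_nat qq)" by (intro sum.cong refl) (simp add: sum.delta)
  finally have Q1: "Qs = of_nat (card W) * of_nat qq" by simp
  have "Qs = (\<Sum>y\<in>UNIV. (\<Sum>x\<in>W. psiK (x * y)) * (\<Sum>x'\<in>W. psiK (- (x' * y))))"
    unfolding Qs_def by (intro sum.cong refl) (simp add: psiK_prod_split sum_product)
  also have "\<dots> = (\<Sum>y\<in>UNIV. (if y \<in> Wp W then of_nat (card W) * of_nat (card W) else 0))"
    by (intro sum.cong refl) (simp add: sub_sum_neg[OF assms] sub_sum[OF assms])
  also have "\<dots> = of_nat (card (Wp W)) * (of_nat (card W) * of_nat (card W))"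
    by (simp add: sum.If_cases)
  finally have Q2: "Qs = of_nat (card (Wp W)) * (of_nat (card W) * of_nat (card W))" .
  have "(of_nat (card (Wp W) * (card W * card W)) :: complex) = of_nat (card W * qq)"
    by (simp only: of_nat_mult Q1[symmetric] Q2[symmetric])
  hence "card (Wp W) * (card W * card W) = card W * qq" by (simp del: of_nat_mult)
  moreover have "card W > 0" using assms unfolding addsub_def by (auto simp: card_gt_0_iff)
  ultimately show ?thesis by (cases "W = {}") (auto simp: ac_simps)
qed

lemma indicator_Sc: "of_nat qq * (if z \<in> Sc then 1 else 0) = (\<Sum>s\<in>Sc. \<Sum>y\<in>UNIV. psiK (y * (z - s)))"
proof -
  have "(\<Sum>s\<in>Sc. \<Sum>y\<in>UNIV. psiK (y * (z - s))) = (\<Sum>s\<in>Sc. if s = z then of_nat qq else 0)"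
    by (intro sum.cong refl) (auto simp: sumK_psi_mult)
  also have "\<dots> = (if z \<in> Sc then of_nat qq else 0)" by (simp add: sum.delta')
  finally show ?thesis by simp
qed

lemma edges: assumes "addsub W"
  shows "of_nat (card {z \<in> W \<times> W. fst z - snd z \<in> Sc}) * of_nat qq =
         of_nat (card W) * of_nat (card W) * (\<Sum>y\<in>Wp W. Lam (- y))"
proof -
  have c: "of_nat (card {z \<in> W \<times> W. fst z - snd z \<in> Sc}) =
           (\<Sum>x\<in>W. \<Sum>x'\<in>W. (if x - x' \<in> Sc then 1 else 0 :: complex))"
  proof -
    have "of_nat (card {z \<in> W \<times> W. fst z - snd z \<in> Sc}) = (\<Sum>z\<in>{z \<in> W \<times> W. fst z - snd z \<in> Sc}. (1::complex))"
      by simp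
    also have "\<dots> = (\<Sum>z\<in>W \<times> W. (if fst z - snd z \<in> Sc then 1 else 0 :: complex))"
      by (rule sum.inter_filter) simp
    also have "\<dots> = (\<Sum>x\<in>W. \<Sum>x'\<in>W. (if x - x' \<in> Sc then 1 else 0 :: complex))"
      by (simp add: sum.cartesian_product')
    finally show ?thesis .
  qed
  define f where "f x x' s y = psiK (x * y) * psiK (- (x' * y)) * psiK ((- y) * s)" for x x' s y
  have fe: "psiK (y * (x - x' - s)) = f x x' s y" for x x' s y
  proof -
    have e: "y * (x - x' - s) = x * y + - (x' * y) + (- y) * s" by (simp add: algebra_simps)
    show ?thesis unfolding e f_def by (simp only: psiK_add)
  qed
  have "of_nat (card {z \<in> W \<times> W. fst z - snd z \<in> Sc}) * of_nat qq =
        (\<Sum>x\<in>W. \<Sum>x'\<in>W. \<Sum>s\<in>Sc. \<Sum>y\<in>UNIV. f x x' s y)"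
  proof -
    have ind2: "(if x - x' \<in> Sc then 1 else 0) * of_nat qq = (\<Sum>s\<in>Sc. \<Sum>y\<in>UNIV. f x x' s y)" for x x'
      using indicator_Sc[of "x - x'"] fe by (simp add: mult.commute)
    show ?thesis unfolding c sum_distrib_right by (intro sum.cong refl) (rule ind2)
  qed
  also have "\<dots> = (\<Sum>x\<in>W. \<Sum>x'\<in>W. \<Sum>y\<in>UNIV. \<Sum>s\<in>Sc. f x x' s y)"
    by (rule sum.cong[OF refl], rule sum.cong[OF refl], rule sum.swap)
  also have "\<dots> = (\<Sum>x\<in>W. \<Sum>y\<in>UNIV. \<Sum>x'\<in>W. \<Sum>s\<in>Sc. f x x' s y)"
    by (rule sum.cong[OF refl], rule sum.swap)
  also have "\<dots> = (\<Sum>y\<in>UNIV. \<Sum>x\<in>W. \<Sum>x'\<in>W. \<Sum>s\<in>Sc. f x x' s y)"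
    by (rule sum.swap)
  also have "\<dots> = (\<Sum>y\<in>UNIV. (\<Sum>x\<in>W. psiK (x * y)) * (\<Sum>x'\<in>W. psiK (- (x' * y))) * Lam (- y))"
  proof (rule sum.cong[OF refl])
    fix y
    have inner: "(\<Sum>s\<in>Sc. f x x' s y) = psiK (x * y) * psiK (- (x' * y)) * Lam (- y)" for x x'
      unfolding f_def Lam_def by (simp add: sum_distrib_left)
    have "(\<Sum>x\<in>W. \<Sum>x'\<in>W. \<Sum>s\<in>Sc. f x x' s y) = (\<Sum>x\<in>W. \<Sum>x'\<in>W. psiK (x * y) * psiK (- (x' * y))) * Lam (- y)"
      by (simp add: inner sum_distrib_right)
    also have "(\<Sum>x\<in>W. \<Sum>x'\<in>W. psiK (x * y) * psiK (- (x' * y))) =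
               (\<Sum>x\<in>W. psiK (x * y)) * (\<Sum>x'\<in>W. psiK (- (x' * y)))"
      by (rule sum_product[symmetric])
    finally show "(\<Sum>x\<in>W. \<Sum>x'\<in>W. \<Sum>s\<in>Sc. f x x' s y) =
        (\<Sum>x\<in>W. psiK (x * y)) * (\<Sum>x'\<in>W. psiK (- (x' * y))) * Lam (- y)" .
  qed
  also have "\<dots> = (\<Sum>y\<in>UNIV. if y \<in> Wp W then of_nat (card W) * of_nat (card W) * Lam (- y) else 0)"
    by (intro sum.cong refl) (simp add: sub_sum_neg[OF assms] sub_sum[OF assms])
  also have "\<dots> = (\<Sum>y\<in>Wp W. of_nat (card W) * of_nat (card W) * Lam (- y))"
    by (simp add: sum.If_cases)
  also have "\<dots> = of_nat (card W) * of_nat (card W) * (\<Sum>y\<in>Wp W. Lam (- y))"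
    by (simp add: sum_distrib_left)
  finally show ?thesis .
qed

end

context pgraph begin

lemma Lam_neg: assumes "y \<noteq> 0"
  shows "Lam (- y) = (if y \<in> Bc then - (of_nat MM + 1) / 2 else (of_nat MM - 1) / 2)"
proof -
  have ny: "- y \<noteq> 0" using assms by simp
  have "ind (- y) mod 4 = ind y mod 4" by (rule ind_neg_mod4[OF assms])
  moreover have "ind y mod 4 < 4" by simp
  ultimately show ?thesis unfolding Lam_val[OF ny] Bc_def using assms by auto
qed

lemma clique_iff: assumes W: "addsub W" and cW: "card W = MM"
  shows "peisert_clique g W \<longleftrightarrow> Wp W \<inter> Bc = {}"
proof -
  have MMpos: "MM > 0" using MM_ge9 by simp
  have cWp: "card (Wp W) = MM"
  proof -
    have "MM * card (Wp W) = MM * MM" using parseval[OF W] cW qq_sq by (simp add: power2_eq_square)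
    thus ?thesis using MMpos by simp
  qed
  have finWp: "finite (Wp W)" by simp
  define Es where "Es = {z \<in> W \<times> W. fst z - snd z \<in> Sc}"
  define b where "b = card (Wp W \<inter> Bc)"
  have z0: "0 \<in> Wp W" unfolding Wp_def using psiK_0 by simp
  have "of_nat (card Es) * (of_nat MM * of_nat MM) = of_nat MM * of_nat MM * (\<Sum>y\<in>Wp W. Lam (- y))"
    using edges[OF W] cW qq_sq unfolding Es_def by (simp add: power2_eq_square)
  hence E1: "of_nat (card Es) = (\<Sum>y\<in>Wp W. Lam (- y))" using MMpos by simp
  have "(\<Sum>y\<in>Wp W. Lam (- y)) = Lam 0 + (\<Sum>y\<in>Wp W - {0}. Lam (- y))"
    using sum.remove[OF finWp z0, of "\<lambda>y. Lam (- y)"] by simp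
  also have "Wp W - {0} = (Wp W \<inter> Bc) \<union> ((Wp W - {0}) - Bc)" unfolding Bc_def by auto
  also have "(\<Sum>y\<in>(Wp W \<inter> Bc) \<union> ((Wp W - {0}) - Bc). Lam (- y)) =
             (\<Sum>y\<in>Wp W \<inter> Bc. Lam (- y)) + (\<Sum>y\<in>(Wp W - {0}) - Bc. Lam (- y))"
    by (rule sum.union_disjoint) auto
  also have "(\<Sum>y\<in>Wp W \<inter> Bc. Lam (- y)) = (\<Sum>y\<in>Wp W \<inter> Bc. - (of_nat MM + 1) / 2)"
    by (rule sum.cong[OF refl]) (auto simp: Lam_neg Bc_def)
  also have "(\<Sum>y\<in>(Wp W - {0}) - Bc. Lam (- y)) = (\<Sum>y\<in>(Wp W - {0}) - Bc. (of_nat MM - 1) / 2)"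
    by (rule sum.cong[OF refl]) (auto simp: Lam_neg)
  finally have E2: "(of_nat (card Es) :: complex) = of_nat (nn div 2) + of_nat b * (- (of_nat MM + 1) / 2)
      + of_nat (card ((Wp W - {0}) - Bc)) * ((of_nat MM - 1) / 2)"
    using E1 Lam0 unfolding b_def by simp
  have cb: "card ((Wp W - {0}) - Bc) = (MM - 1) - b"
  proof -
    have "(Wp W - {0}) - Bc = (Wp W - {0}) - (Wp W \<inter> Bc)" unfolding Bc_def by auto
    moreover have "Wp W \<inter> Bc \<subseteq> Wp W - {0}" unfolding Bc_def by auto
    ultimately have "card ((Wp W - {0}) - Bc) = card (Wp W - {0}) - card (Wp W \<inter> Bc)"
      by (simp add: card_Diff_subset)
    thus ?thesis using cWp z0 unfolding b_def by simp
  qed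
  have ble: "b \<le> MM - 1"
  proof -
    have "Wp W \<inter> Bc \<subseteq> Wp W - {0}" unfolding Bc_def by auto
    hence "b \<le> card (Wp W - {0})" unfolding b_def by (intro card_mono) auto
    thus ?thesis using cWp z0 by simp
  qed
  have nn2: "(of_nat (nn div 2) :: complex) = (of_nat MM * of_nat MM - 1) / 2"
  proof -
    have "2 * (nn div 2) = nn" using four_dvd_nn by auto
    hence "(2::complex) * of_nat (nn div 2) = of_nat nn" by (metis of_nat_mult of_nat_numeral)
    moreover have "(of_nat nn :: complex) = of_nat MM * of_nat MM - 1"
    proof -
      have "nn + 1 = MM * MM" using qq_eq qq_sq by (simp add: power2_eq_square)
      hence "(of_nat nn :: complex) + 1 = of_nat MM * of_nat MM" by (metis of_nat_1 of_nat_add of_nat_mult)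
      thus ?thesis by (simp add: algebra_simps)
    qed
    ultimately show ?thesis by (simp add: field_simps)
  qed
  have cbc: "(of_nat ((MM - 1) - b) :: complex) = of_nat MM - 1 - of_nat b"
    using ble MMpos by (simp add: of_nat_diff)
  have X: "(of_nat (card Es) :: complex) + of_nat b * of_nat MM = of_nat MM * (of_nat MM - 1)"
    unfolding E2 nn2 cb cbc by (simp add: field_simps)
  have "(of_nat MM - 1 :: complex) = of_nat (MM - 1)" using MMpos by (simp add: of_nat_diff)
  hence "(of_nat (card Es + b * MM) :: complex) = of_nat (MM * (MM - 1))" using X by simp
  hence Eeq: "card Es + b * MM = MM * (MM - 1)" by (rule injD[OF inj_of_nat])
  define Dg where "Dg = {z \<in> W \<times> W. fst z \<noteq> snd z}"
  have cDg: "card Dg = MM * (MM - 1)"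
  proof -
    have "Dg = W \<times> W - (\<lambda>x. (x, x)) ` W" unfolding Dg_def by auto
    moreover have "card ((\<lambda>x. (x, x)) ` W) = MM" using cW by (subst card_image) (auto simp: inj_on_def)
    moreover have "(\<lambda>x. (x, x)) ` W \<subseteq> W \<times> W" by auto
    ultimately have "card Dg = MM * MM - MM" using cW by (simp add: card_Diff_subset card_cartesian_product)
    thus ?thesis by (simp add: algebra_simps)
  qed
  have EsD: "Es \<subseteq> Dg" unfolding Es_def Dg_def Sc_def by auto
  have "peisert_clique g W \<longleftrightarrow> Es = Dg"
  proof
    assume cl: "peisert_clique g W"
    have "Dg \<subseteq> Es"
    proof
      fix z assume "z \<in> Dg"
      then obtain x y where xy: "z = (x, y)" "x \<in> W" "y \<in> W" "x \<noteq> y" unfolding Dg_def by (cases z) auto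
      have "peisert_adj g x y" using cl xy unfolding peisert_clique_def by blast
      hence "x - y \<in> Sc" by (simp only: adj_iff)
      thus "z \<in> Es" unfolding Es_def using xy by simp
    qed
    thus "Es = Dg" using EsD by (rule subset_antisym[rotated])
  next
    assume ED: "Es = Dg"
    show "peisert_clique g W" unfolding peisert_clique_def
    proof (intro ballI impI)
      fix x y assume xy: "x \<in> W" "y \<in> W" "x \<noteq> y"
      hence "(x, y) \<in> Dg" unfolding Dg_def by simp
      hence "(x, y) \<in> Es" using ED by simp
      hence "x - y \<in> Sc" unfolding Es_def by simp
      thus "peisert_adj g x y" by (simp only: adj_iff)
    qed
  qed
  also have "\<dots> \<longleftrightarrow> card Es = card Dg"
  proof
    assume "card Es = card Dg"
    moreover have "finite Dg" unfolding Dg_def by simp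
    ultimately show "Es = Dg" using card_subset_eq EsD by blast
  qed simp
  also have "\<dots> \<longleftrightarrow> b * MM = 0" using Eeq cDg by linarith
  also have "\<dots> \<longleftrightarrow> b = 0" using MMpos by simp
  also have "\<dots> \<longleftrightarrow> Wp W \<inter> Bc = {}" unfolding b_def by simp
  finally show ?thesis .
qed

end

context pgraph begin

lemma addsub_FF: "addsub FF" unfolding addsub_def using FF_0 FF_add FF_neg by blast

definition Iset :: "'a set" where "Iset = {x ^ QQ - x | x. True}"
definition Wh :: "'a \<Rightarrow> 'a set" where "Wh h = (\<lambda>z. fst z + snd z * h) ` (FF \<times> FF)"

lemma psiK_frob_pow: "psiK (w ^ (p ^ k)) = psiK w"
proof (induction k)
  case (Suc k)
  have "w ^ (p ^ Suc k) = (w ^ (p ^ k)) ^ p" by (simp only: power_Suc2 power_mult)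
  thus ?case using Suc psiK_frob by simp
qed simp

lemma psiK_QQ: "psiK (w ^ QQ) = psiK w" unfolding QQ_def by (rule psiK_frob_pow)

lemma Iset_sub: "Iset \<subseteq> Wp FF"
proof
  fix y assume "y \<in> Iset"
  then obtain z where z: "y = z ^ QQ - z" unfolding Iset_def by blast
  show "y \<in> Wp FF" unfolding Wp_def
  proof (intro CollectI ballI)
    fix c assume c: "c \<in> FF"
    have "c * y = (c * z) ^ QQ - c * z" using c unfolding z FF_def by (simp add: power_mult_distrib algebra_simps)
    hence "psiK (c * y) = psiK ((c * z) ^ QQ) * psiK (- (c * z))" by (simp add: psiK_add[symmetric])
    also have "\<dots> = psiK (c * z + - (c * z))" by (simp only: psiK_QQ psiK_add)
    finally show "psiK (c * y) = 1" using psiK_0 by simp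
  qed
qed

lemma card_Iset: "card Iset * QQ = qq"
proof -
  define phi where "phi x = x ^ QQ - x" for x :: 'a
  have I_eq: "Iset = range phi" unfolding Iset_def phi_def by auto
  have phi_add: "phi (a + b) = phi a + phi b" for a b
    unfolding phi_def QQ_def by (simp add: frob_add)
  have fib: "card {x. phi x = z} = QQ" if "z \<in> range phi" for z
  proof -
    obtain x0 where x0: "z = phi x0" using \<open>z \<in> range phi\<close> by blast
    have "{x. phi x = z} = (\<lambda>f. x0 + f) ` FF"
    proof (intro equalityI subsetI)
      fix x assume "x \<in> {x. phi x = z}"
      hence "phi x = phi x0" using x0 by simp
      hence "phi (x - x0) = 0" using phi_add[of "x - x0" x0] by simp
      hence "x - x0 \<in> FF" unfolding phi_def FF_def by simp
      thus "x \<in> (\<lambda>f. x0 + f) ` FF" by (intro image_eqI[of _ _ "x - x0"]) auto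
    next
      fix x assume "x \<in> (\<lambda>f. x0 + f) ` FF"
      then obtain f where f: "f \<in> FF" "x = x0 + f" by blast
      have "phi f = 0" using f unfolding phi_def FF_def by simp
      thus "x \<in> {x. phi x = z}" using f phi_add x0 by simp
    qed
    moreover have "card ((\<lambda>f. x0 + f) ` FF) = QQ" using card_FF by (subst card_image) (auto simp: inj_on_def)
    ultimately show ?thesis by simp
  qed
  have "qq = (\<Sum>x\<in>(UNIV::'a set). (1::nat))" using card_UNIV by simp
  also have "\<dots> = (\<Sum>z\<in>range phi. \<Sum>x\<in>{x \<in> UNIV. phi x = z}. 1)"
    by (rule sum.group[symmetric]) auto
  also have "\<dots> = (\<Sum>z\<in>range phi. QQ)" by (intro sum.cong refl) (simp add: fib)
  also have "\<dots> = card (range phi) * QQ" by simp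
  finally show ?thesis unfolding I_eq by simp
qed

lemma Iset_eq: "Iset = Wp FF"
proof -
  have "QQ * card (Wp FF) = qq" using parseval[OF addsub_FF] card_FF by simp
  hence "QQ * card (Wp FF) = QQ * card Iset" using card_Iset by (simp add: mult.commute)
  hence "card (Wp FF) = card Iset" using QQ_ge3 by simp
  thus ?thesis using card_subset_eq[OF _ Iset_sub] by simp
qed

lemma addsub_Wh: "addsub (Wh h)"
  unfolding addsub_def
proof (intro conjI ballI)
  show "0 \<in> Wh h" unfolding Wh_def using FF_0 by (intro image_eqI[of _ _ "(0, 0)"]) auto
next
  fix x y assume "x \<in> Wh h" "y \<in> Wh h"
  then obtain a b a' b' where ab: "a \<in> FF" "b \<in> FF" "x = a + b * h" "a' \<in> FF" "b' \<in> FF" "y = a' + b' * h"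
    unfolding Wh_def by auto
  have "x + y = (a + a') + (b + b') * h" using ab by (simp add: algebra_simps)
  thus "x + y \<in> Wh h" unfolding Wh_def using ab FF_add by (intro image_eqI[of _ _ "(a + a', b + b')"]) auto
next
  fix x assume "x \<in> Wh h"
  then obtain a b where ab: "a \<in> FF" "b \<in> FF" "x = a + b * h" unfolding Wh_def by auto
  have "- x = (- a) + (- b) * h" using ab by simp
  thus "- x \<in> Wh h" unfolding Wh_def using ab FF_neg by (intro image_eqI[of _ _ "(- a, - b)"]) auto
qed

lemma card_Wh: assumes "h \<notin> FF" shows "card (Wh h) = MM"
proof -
  have "inj_on (\<lambda>z. fst z + snd z * h) (FF \<times> FF)"
  proof (rule inj_onI)
    fix z z' assume z: "z \<in> FF \<times> FF" "z' \<in> FF \<times> FF" "fst z + snd z * h = fst z' + snd z' * h"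
    obtain a b a' b' where e: "z = (a, b)" "z' = (a', b')" by (cases z, cases z')
    have F: "a \<in> FF" "b \<in> FF" "a' \<in> FF" "b' \<in> FF" using z e by auto
    have eq: "a + b * h = a' + b' * h" using z e by simp
    have "b = b'"
    proof (rule ccontr)
      assume "b \<noteq> b'"
      hence nz: "b - b' \<noteq> 0" by simp
      have "(b - b') * h = a' - a" using eq by (simp add: algebra_simps)
      hence "h = (a' - a) * inverse (b - b')" using nz by (simp add: field_simps)
      moreover have "(a' - a) * inverse (b - b') \<in> FF"
        by (rule FF_mult[OF FF_diff[OF F(3) F(1)] FF_inv[OF FF_diff[OF F(2) F(4)]]])
      ultimately show False using assms by simp
    qed
    moreover hence "a = a'" using eq by simp
    ultimately show "z = z'" using e by simp
  qed
  hence "card (Wh h) = card (FF \<times> FF)" unfolding Wh_def by (rule card_image)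
  thus ?thesis using card_FF MM_sq by (simp add: card_cartesian_product power2_eq_square)
qed

lemma Wp_Wh: assumes "h \<noteq> 0" shows "Wp (Wh h) = Iset \<inter> {inverse h * x | x. x \<in> Iset}"
proof (intro equalityI subsetI)
  fix y assume y: "y \<in> Wp (Wh h)"
  have all: "\<And>w. w \<in> Wh h \<Longrightarrow> psiK (w * y) = 1" using y unfolding Wp_def by simp
  have A: "psiK (a * y) = 1" if "a \<in> FF" for a
  proof -
    have "a \<in> Wh h" unfolding Wh_def using that FF_0 by (intro image_eqI[of _ _ "(a, 0)"]) auto
    thus ?thesis by (rule all)
  qed
  have B: "psiK (b * (h * y)) = 1" if "b \<in> FF" for b
  proof -
    have "b * h \<in> Wh h" unfolding Wh_def using that FF_0 by (intro image_eqI[of _ _ "(0, b)"]) auto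
    hence "psiK ((b * h) * y) = 1" by (rule all)
    thus ?thesis by (simp add: mult.assoc)
  qed
  have "y \<in> Wp FF" unfolding Wp_def using A by blast
  moreover have "h * y \<in> Wp FF" unfolding Wp_def using B by blast
  ultimately have "y \<in> Iset" "h * y \<in> Iset" unfolding Iset_eq by auto
  moreover have "y = inverse h * (h * y)" using assms by simp
  ultimately show "y \<in> Iset \<inter> {inverse h * x | x. x \<in> Iset}" by blast
next
  fix y assume "y \<in> Iset \<inter> {inverse h * x | x. x \<in> Iset}"
  then obtain x where y: "y \<in> Iset" "x \<in> Iset" "y = inverse h * x" by blast
  have hy: "h * y = x" using y(3) assms by simp
  show "y \<in> Wp (Wh h)" unfolding Wp_def
  proof (intro CollectI ballI)
    fix w assume "w \<in> Wh h"
    then obtain a b where ab: "a \<in> FF" "b \<in> FF" "w = a + b * h" unfolding Wh_def by auto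
    have "w * y = a * y + b * x" using ab hy by (simp add: algebra_simps)
    hence "psiK (w * y) = psiK (a * y) * psiK (b * x)" by (simp add: psiK_add)
    moreover have "psiK (a * y) = 1" using y(1) ab(1) unfolding Iset_eq Wp_def by auto
    moreover have "psiK (b * x) = 1" using y(2) ab(2) unfolding Iset_eq Wp_def by auto
    ultimately show "psiK (w * y) = 1" by simp
  qed
qed

end

context pgraph begin

lemma FF_class0: assumes "x \<in> FF" "x \<noteq> 0" shows "ind x mod 4 = 0"
proof -
  have "nn div (QQ - 1) dvd ind x" using subfield_mem[of QQ x] assms QQ_ge3 QQ1_dvd unfolding FF_def by auto
  moreover have "nn div (QQ - 1) = (QQ + 1) * (MM + 1)"
  proof -
    have e1: "MM - 1 = (QQ - 1) * (QQ + 1)" using MM_sq QQ_ge3 by (simp add: power2_eq_square algebra_simps)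
    have nnq: "nn = (QQ - 1) * ((QQ + 1) * (MM + 1))" unfolding nn_eq e1 by (rule mult.assoc)
    have "QQ - 1 \<noteq> 0" using QQ_ge3 by simp
    thus ?thesis by (subst nnq) (rule nonzero_mult_div_cancel_left)
  qed
  moreover have "4 dvd (QQ + 1) * (MM + 1)"
  proof -
    have d1: "2 dvd QQ + 1" using QQ_odd by simp
    have d2: "2 dvd MM + 1" using MM_odd by simp
    obtain u where u: "QQ + 1 = 2 * u" using d1 by (elim dvdE)
    obtain v where v: "MM + 1 = 2 * v" using d2 by (elim dvdE)
    have "(QQ + 1) * (MM + 1) = 4 * (u * v)" unfolding u v by simp
    thus ?thesis by simp
  qed
  ultimately have "4 dvd ind x" using dvd_trans by simp
  thus ?thesis by simp
qed

lemma Sc_mult0: assumes "c \<noteq> 0" "ind c mod 4 = 0" "s \<in> Sc" shows "c * s \<in> Sc"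
proof -
  have s: "s \<noteq> 0" "ind s mod 4 = 0 \<or> ind s mod 4 = 1" using assms(3) unfolding Sc_def by auto
  have "ind (c * s) mod 4 = (ind c + ind s) mod 4"
    using ind_mult[OF assms(1) s(1)] four_dvd_nn by (simp add: mod_mod_cancel)
  also have "\<dots> = ind s mod 4" using assms(2) by (simp add: mod_add_left_eq[symmetric])
  finally show ?thesis unfolding Sc_def using s assms(1) by simp
qed

lemma FF_Sc: "x \<in> FF \<Longrightarrow> x \<noteq> 0 \<Longrightarrow> x \<in> Sc" unfolding Sc_def using FF_class0 by simp

lemma FF_clique: "peisert_clique g FF"
  unfolding peisert_clique_def adj_iff using FF_Sc FF_diff by simp

lemma nonmax_Wh: assumes v: "v \<notin> FF" and cl: "peisert_clique g (insert v FF)"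
  shows "peisert_clique g (Wh v)"
  unfolding peisert_clique_def adj_iff
proof (intro ballI impI)
  fix x y assume "x \<in> Wh v" "y \<in> Wh v" "x \<noteq> y"
  then obtain a b a' b' where ab: "a \<in> FF" "b \<in> FF" "x = a + b * v" "a' \<in> FF" "b' \<in> FF" "y = a' + b' * v"
    unfolding Wh_def by auto
  have d: "x - y = (a - a') + (b - b') * v" using ab by (simp add: algebra_simps)
  show "x - y \<in> Sc"
  proof (cases "b = b'")
    case True
    hence "x - y = a - a'" using d by simp
    note xya = this
    moreover have "a - a' \<in> FF" using ab FF_diff by blast
    moreover have "a - a' \<noteq> 0"
    proof
      assume "a - a' = 0"
      hence "x - y = 0" using xya by simp
      thus False using \<open>x \<noteq> y\<close> by simp
    qed
    ultimately show ?thesis using FF_Sc by simp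
  next
    case False
    define e where "e = b - b'"
    define a2 where "a2 = (a' - a) * inverse e"
    have enz: "e \<noteq> 0" unfolding e_def using False by simp
    have eF: "e \<in> FF" unfolding e_def using ab FF_diff by blast
    have a2F: "a2 \<in> FF" unfolding a2_def by (rule FF_mult[OF FF_diff[OF ab(4) ab(1)] FF_inv[OF eF]])
    have "x - y = e * (v - a2)" unfolding d a2_def e_def using enz[unfolded e_def]
      by (simp add: field_simps)
    moreover have "v - a2 \<in> Sc"
    proof -
      have "v \<noteq> a2" using v a2F by auto
      hence "peisert_adj g v a2" using cl a2F unfolding peisert_clique_def by auto
      thus ?thesis by (simp only: adj_iff)
    qed
    moreover have "ind e mod 4 = 0" using FF_class0[OF eF enz] .
    ultimately show ?thesis using Sc_mult0 enz by simp
  qed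
qed

lemma clique_bound: assumes "peisert_clique g C" shows "card C \<le> MM"
proof -
  define phi where "phi x = g ^ 3 * x ^ p" for x :: 'a
  have frob_inj: "x ^ p = y ^ p \<Longrightarrow> x = y" for x y :: 'a
  proof -
    assume "x ^ p = y ^ p"
    hence "(x - y) ^ (p ^ 1) = 0" using frob_diff[of x y 1] by simp
    thus "x = y" by simp
  qed
  have inj: "inj phi" unfolding phi_def using frob_inj by (auto intro!: injI)
  have notS: "phi x - phi y \<notin> Sc" if "x \<in> C" "y \<in> C" "x \<noteq> y" for x y
  proof -
    have "x - y \<in> Sc" using assms that unfolding peisert_clique_def adj_iff by blast
    hence xy: "x - y \<noteq> 0" "ind (x - y) mod 4 = 0 \<or> ind (x - y) mod 4 = 1" unfolding Sc_def by auto
    have fd: "(x - y) ^ p = x ^ p - y ^ p" using frob_diff[of x y 1] by simp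
    have "phi x - phi y = g ^ 3 * (x - y) ^ p" unfolding phi_def fd by (simp add: algebra_simps)
    moreover have "(x - y) ^ p \<noteq> 0" using xy by simp
    moreover have "ind (g ^ 3 * (x - y) ^ p) mod 4 = (3 + ind (x - y) * p) mod 4"
    proof -
      have "ind (g ^ 3 * (x - y) ^ p) = (ind (g ^ 3) + ind ((x - y) ^ p)) mod nn"
        using ind_mult[of "g ^ 3" "(x - y) ^ p"] xy by simp
      also have "ind (g ^ 3) = 3 mod nn" by (rule ind_gpow)
      also have "ind ((x - y) ^ p) = (ind (x - y) * p) mod nn" using ind_pow xy by simp
      finally have "ind (g ^ 3 * (x - y) ^ p) = (3 mod nn + (ind (x - y) * p) mod nn) mod nn" .
      hence "ind (g ^ 3 * (x - y) ^ p) mod 4 = (3 mod nn + (ind (x - y) * p) mod nn) mod 4"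
        using four_dvd_nn by (simp add: mod_mod_cancel)
      also have "\<dots> = ((3 mod nn) mod 4 + ((ind (x - y) * p) mod nn) mod 4) mod 4"
        by (rule mod_add_eq[symmetric])
      also have "(3 mod nn) mod 4 = 3 mod 4" using four_dvd_nn by (simp add: mod_mod_cancel)
      also have "((ind (x - y) * p) mod nn) mod 4 = (ind (x - y) * p) mod 4" using four_dvd_nn by (simp add: mod_mod_cancel)
      also have "(3 mod 4 + (ind (x - y) * p) mod 4) mod 4 = (3 + ind (x - y) * p) mod 4"
        by (rule mod_add_eq)
      finally show ?thesis .
    qed
    moreover have "(3 + ind (x - y) * p) mod 4 = 2 \<or> (3 + ind (x - y) * p) mod 4 = 3"
    proof -
      have "(3 + ind (x - y) * p) mod 4 = (3 + (ind (x - y) * p) mod 4) mod 4"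
        by (rule mod_add_right_eq[symmetric])
      also have "(ind (x - y) * p) mod 4 = ((ind (x - y) mod 4) * (p mod 4)) mod 4"
        by (rule mod_mult_eq[symmetric])
      finally have "(3 + ind (x - y) * p) mod 4 = (3 + ((ind (x - y) mod 4) * (p mod 4)) mod 4) mod 4" .
      thus ?thesis using xy(2) p_mod by auto
    qed
    ultimately show ?thesis unfolding Sc_def by auto
  qed
  define D where "D = phi ` C"
  have cD: "card D = card C" unfolding D_def using inj by (simp add: card_image inj_on_subset)
  have "inj_on (\<lambda>z. fst z + snd z) (C \<times> D)"
  proof (rule inj_onI)
    fix z z' assume z: "z \<in> C \<times> D" "z' \<in> C \<times> D" "fst z + snd z = fst z' + snd z'"
    obtain c d c' d' where e: "z = (c, d)" "z' = (c', d')" by (cases z, cases z')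
    have cd: "c \<in> C" "d \<in> D" "c' \<in> C" "d' \<in> D" using z e by auto
    have eq: "c - c' = d' - d" using z e by (simp add: algebra_simps)
    have "c = c'"
    proof (rule ccontr)
      assume ne: "c \<noteq> c'"
      hence "c - c' \<in> Sc" using assms cd unfolding peisert_clique_def adj_iff by blast
      obtain u u' where u: "u \<in> C" "d = phi u" "u' \<in> C" "d' = phi u'" using cd unfolding D_def by blast
      have "d' \<noteq> d" using eq ne by auto
      hence "u' \<noteq> u" using u by auto
      hence "d' - d \<notin> Sc" using notS u by simp
      thus False using eq \<open>c - c' \<in> Sc\<close> by simp
    qed
    moreover hence "d = d'" using eq by simp
    ultimately show "z = z'" using e by simp
  qed
  hence "card (C \<times> D) \<le> card (UNIV :: 'a set)" by (rule card_inj_on_le) auto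
  hence "card C * card C \<le> MM * MM" using cD card_UNIV qq_sq by (simp add: card_cartesian_product power2_eq_square)
  show ?thesis
  proof (rule ccontr)
    assume "\<not> card C \<le> MM"
    hence "MM < card C" by simp
    hence "MM * MM < card C * card C" by (intro mult_strict_mono) auto
    thus False using \<open>card C * card C \<le> MM * MM\<close> by simp
  qed
qed

lemma B_eq: "{g ^ (4 * k) | k. 1 \<le> k \<and> k \<le> (p ^ (4 * r) - 1) div 4}
             \<union> {g ^ (4 * k + 3) | k. 1 \<le> k \<and> k \<le> (p ^ (4 * r) - 1) div 4} = Bc"
proof -
  have nnd: "(p ^ (4 * r) - 1) div 4 = nn div 4" unfolding nn_def ..
  obtain m where m: "nn = 4 * m" using four_dvd_nn by blast
  have m1: "m \<ge> 1" using m nn_pos by simp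
  show ?thesis unfolding nnd
  proof (intro equalityI subsetI)
    fix y assume "y \<in> {g ^ (4 * k) | k. 1 \<le> k \<and> k \<le> nn div 4} \<union> {g ^ (4 * k + 3) | k. 1 \<le> k \<and> k \<le> nn div 4}"
    then obtain k where k: "y = g ^ (4 * k) \<or> y = g ^ (4 * k + 3)" by blast
    have "ind y mod 4 = 0 \<or> ind y mod 4 = 3"
    proof (cases "y = g ^ (4 * k)")
      case True
      hence "ind y = (4 * k) mod nn" using ind_gpow by simp
      thus ?thesis using four_dvd_nn by (simp add: mod_mod_cancel)
    next
      case False
      hence "y = g ^ (4 * k + 3)" using k by simp
      hence "ind y = (4 * k + 3) mod nn" using ind_gpow by simp
      hence "ind y mod 4 = (4 * k + 3) mod 4" using four_dvd_nn by (simp add: mod_mod_cancel)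
      thus ?thesis by simp
    qed
    moreover have "y \<noteq> 0" using k by auto
    ultimately show "y \<in> Bc" unfolding Bc_def by simp
  next
    fix y assume "y \<in> Bc"
    hence y: "y \<noteq> 0" "ind y mod 4 = 0 \<or> ind y mod 4 = 3" unfolding Bc_def by auto
    define j where "j = ind y div 4"
    have jlt: "j < m" unfolding j_def using ind_props(1)[OF y(1)] m by simp
    have yg: "y = g ^ ind y" using ind_props(2)[OF y(1)] by simp
    have gm: "g ^ (4 * m) = 1" using g_nn m by simp
    show "y \<in> {g ^ (4 * k) | k. 1 \<le> k \<and> k \<le> nn div 4} \<union> {g ^ (4 * k + 3) | k. 1 \<le> k \<and> k \<le> nn div 4}"
    proof (cases "ind y mod 4 = 0")
      case True
      hence iy: "ind y = 4 * j" unfolding j_def using div_mult_mod_eq[of "ind y" 4] by simp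
      show ?thesis
      proof (cases "j = 0")
        case True
        hence "y = g ^ (4 * m)" using yg iy gm by simp
        thus ?thesis using m m1 by auto
      next
        case False
        thus ?thesis using yg iy jlt m by auto
      qed
    next
      case False
      hence iy: "ind y = 4 * j + 3" using y(2) unfolding j_def using div_mult_mod_eq[of "ind y" 4] by simp
      show ?thesis
      proof (cases "j = 0")
        case True
        hence "y = g ^ 3" using yg iy by simp
        also have "\<dots> = g ^ (4 * m) * g ^ 3" using gm by simp
        also have "\<dots> = g ^ (4 * m + 3)" by (simp add: power_add)
        finally show ?thesis using m m1 by auto
      next
        case False
        thus ?thesis using yg iy jlt m by auto
      qed
    qed
  qed
qed

lemma clique_number_eq: assumes "addsub W" "card W = MM" "peisert_clique g W"
  shows "peisert_clique_number g = MM"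
proof -
  define KS where "KS = {card S | S. peisert_clique g (S :: 'a set)}"
  have fin: "finite KS"
  proof (rule finite_subset)
    show "KS \<subseteq> {..MM}" unfolding KS_def using clique_bound by auto
  qed simp
  have "MM = card W \<and> peisert_clique g W" using assms by simp
  hence "MM \<in> KS" unfolding KS_def by blast
  moreover have "\<forall>k\<in>KS. k \<le> MM" unfolding KS_def using clique_bound by auto
  ultimately have "Max KS = MM" using fin by (intro Max_eqI) auto
  thus ?thesis unfolding peisert_clique_number_def KS_def .
qed

end

theorem corollary5p8:
  fixes g :: "'a::{field,finite}" and p r :: nat
  assumes "r > 0" and "prime p" and "p mod 4 = 3"
    and "card (UNIV :: 'a set) = p ^ (4 * r)"
    and "primitive_root g"
  defines "B \<equiv> {g ^ (4 * k) | k. 1 \<le> k \<and> k \<le> (p ^ (4 * r) - 1) div 4}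
             \<union> {g ^ (4 * k + 3) | k. 1 \<le> k \<and> k \<le> (p ^ (4 * r) - 1) div 4}"
    and "I \<equiv> {x ^ (p ^ r) - x | x::'a. True}"
    and "F \<equiv> {x::'a. x ^ (p ^ r) = x}"
  shows "((\<forall>h. h \<notin> F \<longrightarrow> I \<inter> {inverse h * x | x. x \<in> I} \<inter> B \<noteq> {})
            \<longrightarrow> peisert_maximal_clique g F)
       \<and> (\<not> (\<forall>h. h \<notin> F \<longrightarrow> I \<inter> {inverse h * x | x. x \<in> I} \<inter> B \<noteq> {})
            \<longrightarrow> peisert_clique_number g = p ^ (2 * r))"
proof -
  interpret pgraph g p r by (unfold_locales) (use assms in auto)
  have FE: "F = FF" unfolding F_def FF_def QQ_def ..
  have IE: "I = Iset" unfolding I_def Iset_def QQ_def ..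
  have BE: "B = Bc" unfolding B_def by (rule B_eq)
  have key: "peisert_clique g (Wh h) \<longleftrightarrow> I \<inter> {inverse h * x | x. x \<in> I} \<inter> B = {}" if "h \<notin> F" for h
  proof -
    have hF: "h \<notin> FF" using that FE by simp
    have "h \<noteq> 0" using hF FF_0 by auto
    hence "Wp (Wh h) = I \<inter> {inverse h * x | x. x \<in> I}" unfolding IE by (rule Wp_Wh)
    thus ?thesis using clique_iff[OF addsub_Wh card_Wh[OF hF]] BE by simp
  qed
  show ?thesis
  proof (intro conjI impI)
    assume H: "\<forall>h. h \<notin> F \<longrightarrow> I \<inter> {inverse h * x | x. x \<in> I} \<inter> B \<noteq> {}"
    show "peisert_maximal_clique g F" unfolding peisert_maximal_clique_def
    proof (intro conjI allI impI notI)
      show "peisert_clique g F" unfolding FE by (rule FF_clique)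
    next
      fix v assume vF: "v \<notin> F" and cl: "peisert_clique g (insert v F)"
      have "peisert_clique g (Wh v)" using nonmax_Wh vF cl FE by simp
      hence "I \<inter> {inverse v * x | x. x \<in> I} \<inter> B = {}" using key[OF vF] by simp
      thus False using H vF by simp
    qed
  next
    assume "\<not> (\<forall>h. h \<notin> F \<longrightarrow> I \<inter> {inverse h * x | x. x \<in> I} \<inter> B \<noteq> {})"
    then obtain h where hF: "h \<notin> F" and e: "I \<inter> {inverse h * x | x. x \<in> I} \<inter> B = {}" by blast
    have "peisert_clique g (Wh h)" using key[OF hF] e by simp
    moreover have "card (Wh h) = MM" using card_Wh hF FE by simp
    ultimately have "peisert_clique_number g = MM" using clique_number_eq addsub_Wh by blast
    thus "peisert_clique_number g = p ^ (2 * r)" unfolding MM_def .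
  qed
qed

end
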